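(* For each $\lambda\in\Lambda^{\bullet}(n,r)$ there is an isomorphism of $U_0(\mathfrak{gl}_n)$-modules $\Psi_{n,r}(S_\lambda)\cong D_{\lambda^+}$.
   Context: $\Lambda^\bullet(n,r)$ is the set of weak compositions $\lambda$ of $r$ with $n$ parts such that $\lambda_i=0$ forces $\lambda_j=0$ for $j>i$. $\lambda^+$ is the strong composition obtained by deleting the zeros of $\lambda$. $\mathbf S_0(n,r)$ is the complex $0$-Schur algebra, with Jensen–Su standard basis $\{e_A\}$ indexed by $n\times n$ nonnegative integer matrices with entry sum $r$; $k_\lambda=e_{\mathrm{diag}(\lambda)}$; $e_i,f_i$ are the Chevalley-type generators. $P_\lambda$ is the Jensen–Su–Yang projective indecomposable module with basis $B^\lambda$. $S_\lambda=P_\lambda/N_\lambda$, where $N_\lambda$ is the span of $B^\lambda\setminus\beta^\lambda$, $\beta^\lambda=\{e_A:A \text{ column block diagonal},\ \mathrm{co}(A)=\lambda\}$, and $A$ is column block diagonal if $a_{i,j}>0$ implies $a_{i',s}=0$ for $i'\le i,s>j$. The $S_\lambda$ for $\lambda\in\Lambda^\bullet(n,r)$ are the simple $\mathbf S_0(n,r)$-modules. $\mathbf H_r(0)$ is the $0$-Hecke algebra over $\mathbb C$ (generators $\bar\pi_1,\dots,\bar\pi_{r-1}$, $\bar\pi_i^2=-\bar\pi_i$, braid relations). $V_0^{\otimes r}$ with $V_0=\mathbb C^n$ is a right $\mathbf H_r(0)$-module via $\mathbf v\bar\pi_i=$ ($\mathbf v$ with factors $i,i+1$ swapped if $k_i<k_{i+1}$;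 $0$ if $k_i=k_{i+1}$; $-\mathbf v$ if $k_i>k_{i+1}$). It is a left module over the degenerate quantum group $U_0(\mathfrak{gl}_n)$ of Krob–Thibon via $\mathbf e_i\mapsto E_{i,i+1}$, $\mathbf f_i\mapsto E_{i+1,i}$, $\mathbf k_i\mapsto\sum_{j\ne i}E_{jj}$ on $V_0$ and the coproduct $\Delta(\mathbf e_i)=1\otimes\mathbf e_i+\mathbf e_i\otimes\mathbf k_i$, $\Delta(\mathbf f_i)=\mathbf k_{i+1}\otimes\mathbf f_i+\mathbf f_i\otimes1$, $\Delta(\mathbf k_i)=\mathbf k_i\otimes\mathbf k_i$. The two actions commute. $\mathbf S_0(n,r)\cong\mathrm{End}_{\mathbf H_r(0)}(V_0^{\otimes r})$ (the standard identification of the $0$-Schur algebra as endomorphism algebra of tensor space). $\psi_{n,r}:U_0(\mathfrak{gl}_n)\to\mathbf S_0(n,r)$ is the induced homomorphism; it sends $\mathbf e_i\mapsto e_i$, $\mathbf f_i\mapsto f_i$, $\mathbf k_i\mapsto\sum_{\mu_i=0}k_\mu$. $\Psi_{n,r}:\mathbf S_0(n,r)\text{-mod}\to U_0(\mathfrak{gl}_n)\text{-mod}$ is pullback along $\psi_{n,r}$. For a strong composition $\alpha$ of $r$, $\mathrm{set}(\alpha)=\{\alpha_1,\alpha_1+\alpha_2,\dots\}\subseteq[r-1]$. $F_\alpha$ is the one-dimensional $\mathbf H_r(0)$-module with $\bar\pi_i$ acting by $-1$ if $i\in\mathrm{set}(\alpha)$ and by $0$ otherwise. $D_\alpha:=V_0^{\otimes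 r}\otimes_{\mathbf H_r(0)}F_\alpha$ as a $U_0(\mathfrak{gl}_n)$-module. *)

theory Defs
  imports Complex_Main
begin

text \<open>Letters of words (basis vectors of V_0 = C^n) are 1..n; a word of length r
  indexes the basis vector v_{k_1} (x) ... (x) v_{k_r} of the tensor space.\<close>

definition words :: "nat \<Rightarrow> nat \<Rightarrow> nat list set" where
  "words n r = {k. length k = r \<and> set k \<subseteq> {1..n}}"

definition Mat :: "nat \<Rightarrow> nat \<Rightarrow> (nat \<Rightarrow> nat \<Rightarrow> nat) set" where
  "Mat n r = {A. (\<forall>i j. A i j \<noteq> 0 \<longrightarrow> i \<in> {1..n} \<and> j \<in> {1..n})
                 \<and> (\<Sum>i\<in>{1..n}. \<Sum>j\<in>{1..n}. A i j) = r}"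

definition ro :: "nat \<Rightarrow> (nat \<Rightarrow> nat \<Rightarrow> nat) \<Rightarrow> nat \<Rightarrow> nat" where
  "ro n A i = (\<Sum>j\<in>{1..n}. A i j)"

definition co :: "nat \<Rightarrow> (nat \<Rightarrow> nat \<Rightarrow> nat) \<Rightarrow> nat \<Rightarrow> nat" where
  "co n A j = (\<Sum>i\<in>{1..n}. A i j)"

definition Lambda_bullet :: "nat \<Rightarrow> nat \<Rightarrow> nat list set" where
  "Lambda_bullet n r = {lam. length lam = n \<and> sum_list lam = r \<and>
      (\<forall>i j. i < j \<and> j < n \<and> lam ! i = 0 \<longrightarrow> lam ! j = 0)}"

definition strong :: "nat list \<Rightarrow> nat list" where
  "strong lam = filter (\<lambda>x. x \<noteq> 0) lam"

definition comp_set :: "nat list \<Rightarrow> nat set" where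
  "comp_set alpha = {sum_list (take j alpha) | j. 1 \<le> j \<and> j < length alpha}"

definition col_block_diag :: "(nat \<Rightarrow> nat \<Rightarrow> nat) \<Rightarrow> bool" where
  "col_block_diag A \<longleftrightarrow> (\<forall>i j. A i j > 0 \<longrightarrow> (\<forall>i' s. i' \<le> i \<and> s > j \<longrightarrow> A i' s = 0))"

text \<open>beta^lambda, as a set of matrices A (standing for e_A).\<close>
definition beta :: "nat \<Rightarrow> nat \<Rightarrow> nat list \<Rightarrow> (nat \<Rightarrow> nat \<Rightarrow> nat) set" where
  "beta n r lam = {A \<in> Mat n r. col_block_diag A \<and> (\<forall>j\<in>{1..n}. co n A j = lam ! (j - 1))}"

text \<open>Vectors of the tensor space are functions  nat list => complex  (coefficient of
  the basis vector v_k), supported on words n r.  Linear maps are given by matrices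
  M l k = coefficient of v_l in the image of v_k.\<close>

type_synonym vec = "nat list \<Rightarrow> complex"

definition single :: "nat list \<Rightarrow> vec" where
  "single w = (\<lambda>l. if l = w then 1 else 0)"

text \<open>v_a (x) y\<close>
definition tens :: "nat \<Rightarrow> vec \<Rightarrow> vec" where
  "tens a y = (\<lambda>l. case l of [] \<Rightarrow> 0 | b # l' \<Rightarrow> if b = a then y l' else 0)"

text \<open>Action of U_0(gl_n) generators on basis vectors via the coproduct
  Delta(k_i) = k_i (x) k_i, Delta(e_i) = 1 (x) e_i + e_i (x) k_i,
  Delta(f_i) = k_{i+1} (x) f_i + f_i (x) 1, splitting off the first tensor factor;
  on V_0: e_i = E_{i,i+1}, f_i = E_{i+1,i}, k_i = sum_{j ~= i} E_{jj}.\<close>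
fun kact :: "nat \<Rightarrow> nat list \<Rightarrow> vec" where
  "kact i [] = single []"
| "kact i (a # w) = (if a = i then (\<lambda>_. 0) else tens a (kact i w))"

fun eact :: "nat \<Rightarrow> nat list \<Rightarrow> vec" where
  "eact i [] = (\<lambda>_. 0)"
| "eact i (a # w) = (\<lambda>l. tens a (eact i w) l
                        + (if a = Suc i then tens i (kact i w) l else 0))"

fun fact_act :: "nat \<Rightarrow> nat list \<Rightarrow> vec" where
  "fact_act i [] = (\<lambda>_. 0)"
| "fact_act i (a # w) = (\<lambda>l. (if a = Suc i then 0 else tens a (fact_act i w) l)
                        + (if a = i then tens (Suc i) (single w) l else 0))"

datatype gen = E nat | F nat | K nat

text \<open>Chevalley generators of U_0(gl_n): e_i, f_i (1 <= i < n), k_i (1 <= i <= n).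
  A U_0(gl_n)-module isomorphism is the same as a linear isomorphism intertwining them.\<close>
definition gens :: "nat \<Rightarrow> gen set" where
  "gens n = {E i | i. 1 \<le> i \<and> i < n} \<union> {F i | i. 1 \<le> i \<and> i < n} \<union> {K i | i. 1 \<le> i \<and> i \<le> n}"

definition rho :: "gen \<Rightarrow> nat list \<Rightarrow> nat list \<Rightarrow> complex" where
  "rho g l k = (case g of E i \<Rightarrow> eact i k | F i \<Rightarrow> fact_act i k | K i \<Rightarrow> kact i k) l"

text \<open>Matrix of the right action of pibar_i (1 <= i <= r-1) of H_r(0):
  v pibar_i = v with factors i,i+1 swapped if k_i < k_{i+1}; 0 if equal; -v if k_i > k_{i+1}.\<close>
definition Pi :: "nat \<Rightarrow> nat list \<Rightarrow> nat list \<Rightarrow> complex" where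
  "Pi i l k = (let a = k ! (i - 1); b = k ! i in
      if a < b then (if l = k[i - 1 := b, i := a] then 1 else 0)
      else if a = b then 0
      else (if l = k then -1 else 0))"

section \<open>The 0-Schur algebra as End_{H_r(0)}(V_0^{(x) r}) and its standard basis\<close>

definition is_H_endo :: "nat \<Rightarrow> nat \<Rightarrow> (nat list \<Rightarrow> nat list \<Rightarrow> complex) \<Rightarrow> bool" where
  "is_H_endo n r M \<longleftrightarrow>
     (\<forall>l k. (l \<notin> words n r \<or> k \<notin> words n r) \<longrightarrow> M l k = 0) \<and>
     (\<forall>i\<in>{1..<r}. \<forall>l\<in>words n r. \<forall>k\<in>words n r.
        (\<Sum>m\<in>words n r. M l m * Pi i m k) = (\<Sum>m\<in>words n r. Pi i l m * M m k))"

definition content :: "nat \<Rightarrow> nat list \<Rightarrow> nat \<Rightarrow> nat" where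
  "content n k j = length (filter (\<lambda>x. x = j) k)"

definition sorted_word :: "nat \<Rightarrow> (nat \<Rightarrow> nat) \<Rightarrow> nat list" where
  "sorted_word n mu = concat (map (\<lambda>j. replicate (mu j) j) [1..<Suc n])"

definition block :: "(nat \<Rightarrow> nat) \<Rightarrow> nat \<Rightarrow> nat list \<Rightarrow> nat list" where
  "block mu j l = take (mu j) (drop (\<Sum>t\<in>{1..<j}. mu t) l)"

text \<open>Image of the generating (increasing) vector of weight co(A) under e_A: the sum of all
  v_l such that block j of l (w.r.t. co(A)) contains letter i exactly a_{ij} times
  (the double-coset sum).\<close>
definition yA :: "nat \<Rightarrow> nat \<Rightarrow> (nat \<Rightarrow> nat \<Rightarrow> nat) \<Rightarrow> vec" where
  "yA n r A = (\<lambda>l. if l \<in> words n r \<and>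
        (\<forall>i\<in>{1..n}. \<forall>j\<in>{1..n}. length (filter (\<lambda>x. x = i) (block (co n A) j l)) = A i j)
      then 1 else 0)"

definition eA :: "nat \<Rightarrow> nat \<Rightarrow> (nat \<Rightarrow> nat \<Rightarrow> nat) \<Rightarrow> nat list \<Rightarrow> nat list \<Rightarrow> complex" where
  "eA n r A = (THE M. is_H_endo n r M \<and>
      (\<forall>l. M l (sorted_word n (co n A)) = yA n r A l) \<and>
      (\<forall>k\<in>words n r. (\<exists>j\<in>{1..n}. content n k j \<noteq> co n A j) \<longrightarrow> (\<forall>l. M l k = 0)))"

definition coord :: "nat \<Rightarrow> nat \<Rightarrow> (nat list \<Rightarrow> nat list \<Rightarrow> complex)
                      \<Rightarrow> (nat \<Rightarrow> nat \<Rightarrow> nat) \<Rightarrow> complex" where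
  "coord n r M = (THE c. (\<forall>A. A \<notin> Mat n r \<longrightarrow> c A = 0) \<and>
      M = (\<lambda>l m. \<Sum>A\<in>Mat n r. c A * eA n r A l m))"

text \<open>psi_{n,r}(g) as element of End_{H_r(0)}: the action matrix rho g.  Action of a generator
  on the simple module S_lambda = P_lambda / N_lambda in the basis beta^lambda:
  g . [e_A] = sum over B in beta^lambda of (coefficient of e_B in psi(g) e_A) [e_B]
  (the remaining basis vectors of P_lambda span N_lambda).\<close>
definition S_act :: "nat \<Rightarrow> nat \<Rightarrow> gen \<Rightarrow> (nat \<Rightarrow> nat \<Rightarrow> nat) \<Rightarrow> (nat \<Rightarrow> nat \<Rightarrow> nat) \<Rightarrow> complex" where
  "S_act n r g B A = coord n r (\<lambda>l m. \<Sum>k\<in>words n r. rho g l k * eA n r A k m) B"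

text \<open>D_alpha is the quotient of the tensor space by the span W_alpha of the vectors
  v_k pibar_i - chi_alpha(pibar_i) v_k, where chi_alpha(pibar_i) = -1 if i in set(alpha), else 0.\<close>
definition chi :: "nat list \<Rightarrow> nat \<Rightarrow> complex" where
  "chi alpha i = (if i \<in> comp_set alpha then -1 else 0)"

definition relvec :: "nat list \<Rightarrow> nat \<Rightarrow> nat list \<Rightarrow> vec" where
  "relvec alpha i k = (\<lambda>l. Pi i l k - chi alpha i * single k l)"

definition in_W :: "nat \<Rightarrow> nat \<Rightarrow> nat list \<Rightarrow> vec \<Rightarrow> bool" where
  "in_W n r alpha x \<longleftrightarrow> (\<exists>c :: nat \<times> nat list \<Rightarrow> complex.
      \<forall>l. x l = (\<Sum>p\<in>{1..<r} \<times> words n r. c p * relvec alpha (fst p) (snd p) l))"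

text \<open>Psi_{n,r}(S_lambda) isomorphic to D_alpha as U_0(gl_n)-modules: there is a linear map
  Phi from the tensor space onto S_lambda (matrix Phi B k, B in beta^lambda, k a word) with kernel
  exactly W_alpha and intertwining all generators; by the first isomorphism theorem this is
  the same as a U_0(gl_n)-module isomorphism D_alpha = (tensor space)/W_alpha -> S_lambda.\<close>
definition S_iso_D :: "nat \<Rightarrow> nat \<Rightarrow> nat list \<Rightarrow> nat list \<Rightarrow> bool" where
  "S_iso_D n r lam alpha \<longleftrightarrow> (\<exists>Phi :: (nat \<Rightarrow> nat \<Rightarrow> nat) \<Rightarrow> nat list \<Rightarrow> complex.
     (\<forall>y :: (nat \<Rightarrow> nat \<Rightarrow> nat) \<Rightarrow> complex. \<exists>x :: vec.
        \<forall>B\<in>beta n r lam. (\<Sum>k\<in>words n r. Phi B k * x k) = y B) \<and>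
     (\<forall>x :: vec. (\<forall>k. k \<notin> words n r \<longrightarrow> x k = 0) \<longrightarrow>
        ((\<forall>B\<in>beta n r lam. (\<Sum>k\<in>words n r. Phi B k * x k) = 0) \<longleftrightarrow> in_W n r alpha x)) \<and>
     (\<forall>g\<in>gens n. \<forall>B\<in>beta n r lam. \<forall>k\<in>words n r.
        (\<Sum>A\<in>beta n r lam. S_act n r g B A * Phi A k) = (\<Sum>l\<in>words n r. Phi B l * rho g l k)))"

end

theory Submission
  imports Defs "HOL-Library.Multiset"
begin


definition sw :: "nat \<Rightarrow> nat list \<Rightarrow> nat list" where
  "sw i k = k[i - 1 := k ! i, i := k ! (i - 1)]"

lemma length_sw[simp]: "length (sw i k) = length k" by (simp add: sw_def)

lemma nth_sw: "1 \<le> i \<Longrightarrow> i < length k \<Longrightarrow> p < length k \<Longrightarrow>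
  sw i k ! p = (if p = i - 1 then k ! i else if p = i then k ! (i - 1) else k ! p)"
  by (auto simp: sw_def nth_list_update)

lemma nth_sw1[simp]: "1 \<le> i \<Longrightarrow> i < length k \<Longrightarrow> sw i k ! (i - Suc 0) = k ! i"
  by (simp add: nth_sw)
lemma nth_sw2[simp]: "1 \<le> i \<Longrightarrow> i < length k \<Longrightarrow> sw i k ! i = k ! (i - Suc 0)"
  by (simp add: nth_sw)

lemma sw_sw[simp]: "1 \<le> i \<Longrightarrow> i < length k \<Longrightarrow> sw i (sw i k) = k"
  by (rule nth_equalityI) (auto simp: nth_sw)

lemma sw_same: "k ! (i - 1) = k ! i \<Longrightarrow> sw i k = k"
  unfolding sw_def by (metis list_update_id)

lemma mset_sw[simp]: "1 \<le> i \<Longrightarrow> i < length k \<Longrightarrow> mset (sw i k) = mset k"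
  unfolding sw_def using mset_swap[of i k "i - 1"] by simp

lemma set_sw[simp]: "1 \<le> i \<Longrightarrow> i < length k \<Longrightarrow> set (sw i k) = set k"
  by (metis mset_sw set_mset_mset)

lemma sw_words: "1 \<le> i \<Longrightarrow> i < r \<Longrightarrow> sw i k \<in> words n r \<longleftrightarrow> k \<in> words n r"
  by (cases "length k = r") (auto simp: words_def)

lemma sw_Cons: "2 \<le> i \<Longrightarrow> sw i (a # w) = a # sw (i - 1) w"
  by (cases i; cases "i - 1") (auto simp: sw_def)

lemma sw_Cons1[simp]: "sw (Suc 0) (a # b # w) = b # a # w"
  by (simp add: sw_def)

lemma sw_inj: "1 \<le> i \<Longrightarrow> i < length k \<Longrightarrow> length l = length k \<Longrightarrow> sw i l = k \<longleftrightarrow> l = sw i k"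
  by (metis length_sw sw_sw)

lemma sw_neq: "1 \<le> i \<Longrightarrow> i < length k \<Longrightarrow> k ! i \<noteq> k ! (i - 1) \<Longrightarrow> sw i k \<noteq> k"
proof
  assume a: "1 \<le> i" "i < length k" "k ! i \<noteq> k ! (i - 1)" "sw i k = k"
  have "sw i k ! i = k ! (i - 1)" using a(1,2) by simp
  then show False using a by simp
qed

fun ninv :: "nat list \<Rightarrow> nat" where
  "ninv [] = 0"
| "ninv (a # w) = length (filter (\<lambda>b. b < a) w) + ninv w"

lemma length_filter_mset: "mset xs = mset ys \<Longrightarrow> length (filter P xs) = length (filter P ys)"
  by (metis mset_filter size_mset)

lemma ninv_sw_desc: "1 \<le> i \<Longrightarrow> i < length k \<Longrightarrow> k ! i < k ! (i - 1) \<Longrightarrow> ninv (sw i k) + 1 = ninv k"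
proof (induction k arbitrary: i)
  case Nil
  then show ?case by simp
next
  case (Cons a w)
  show ?case
  proof (cases "i = 1")
    case True
    then obtain b w' where w: "w = b # w'" using Cons by (cases w) auto
    show ?thesis using Cons.prems True by (simp add: w sw_Cons1)
  next
    case False
    then have i2: "2 \<le> i" using Cons by simp
    have "ninv (sw (i - 1) w) + 1 = ninv w"
      using Cons.IH[of "i - 1"] Cons.prems i2 by (cases i) auto
    moreover have "mset (sw (i - 1) w) = mset w" using Cons.prems i2 by simp
    then have "length (filter (\<lambda>b. b < a) (sw (i - 1) w)) = length (filter (\<lambda>b. b < a) w)"
      by (rule length_filter_mset)
    ultimately show ?thesis using i2
      by (simp add: sw_Cons)
  qed
qed

lemma ninv_sw_asc: "1 \<le> i \<Longrightarrow> i < length k \<Longrightarrow> k ! (i - 1) < k ! i \<Longrightarrow> ninv (sw i k) = ninv k + 1"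
proof -
  assume a: "1 \<le> i" "i < length k" "k ! (i - 1) < k ! i"
  then have "sw i k ! i < sw i k ! (i - 1)" by simp
  with ninv_sw_desc[of i "sw i k"] a show ?thesis by simp
qed

lemma sorted_ninv: "sorted k \<Longrightarrow> ninv k = 0"
  by (induction k) (auto simp: filter_empty_conv)

lemma not_sorted_desc: "\<not> sorted k \<Longrightarrow> \<exists>i. 1 \<le> i \<and> i < length k \<and> k ! i < k ! (i - 1)"
proof -
  assume "\<not> sorted k"
  then obtain i where "Suc i < length k" "k ! Suc i < k ! i" unfolding sorted_iff_nth_Suc by auto
  then show ?thesis by (intro exI[of _ "Suc i"]) auto
qed

lemma sorted_no_desc: "sorted k \<Longrightarrow> 1 \<le> i \<Longrightarrow> i < length k \<Longrightarrow> k ! (i - 1) \<le> k ! i"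
  by (cases i) (auto simp: sorted_iff_nth_Suc)

lemma sorted_mset_eq: "sorted k \<Longrightarrow> sorted s \<Longrightarrow> mset k = mset s \<Longrightarrow> k = s"
  by (metis properties_for_sort)

lemma mset_take_sw: "c \<noteq> i \<Longrightarrow> 1 \<le> i \<Longrightarrow> i < length k \<Longrightarrow> mset (take c (sw i k)) = mset (take c k)"
proof (cases "c < i")
  case True
  assume "1 \<le> i" "i < length k"
  with True show ?thesis by (simp add: sw_def)
next
  case False
  assume a: "c \<noteq> i" "1 \<le> i" "i < length k"
  with False have ci: "i < c" by simp
  have "take c (sw i k) = sw i (take c k)"
    unfolding sw_def using ci a by (simp add: take_update_swap)
  moreover have "mset (sw i (take c k)) = mset (take c k)" using ci a by (intro mset_sw) auto
  ultimately show ?thesis by simp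
qed

definition rv :: "nat \<Rightarrow> vec \<Rightarrow> vec" where
  "rv i z = (\<lambda>l. if 1 \<le> i \<and> i < length l \<and> l ! i < l ! (i - 1) then z (sw i l) - z l else 0)"

definition supp :: "nat \<Rightarrow> nat \<Rightarrow> vec \<Rightarrow> bool" where
  "supp n r z \<longleftrightarrow> (\<forall>m. m \<notin> words n r \<longrightarrow> z m = 0)"

lemma finite_words[simp]: "finite (words n r)"
proof -
  have "words n r \<subseteq> {xs. set xs \<subseteq> {1..n} \<and> length xs = r}" by (auto simp: words_def)
  moreover have "finite {xs. set xs \<subseteq> {1..n} \<and> length xs = r}" by (rule finite_lists_length_eq) simp
  ultimately show ?thesis by (rule finite_subset)
qed

lemma words_length: "k \<in> words n r \<Longrightarrow> length k = r" by (simp add: words_def)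

lemma Pi_pointwise:
  assumes "1 \<le> i" "i < length m"
  shows "Pi i l m = (if i < length l \<and> l ! i < l ! (i - 1) \<and> m = sw i l then 1 else 0)
                   + (if l ! i < l ! (i - 1) \<and> m = l then -1 else 0)"
proof -
  consider "m ! (i - 1) < m ! i" | "m ! (i - 1) = m ! i" | "m ! i < m ! (i - 1)" by linarith
  then show ?thesis
  proof cases
    case 1
    have "l = sw i m \<longleftrightarrow> (i < length l \<and> l ! i < l ! (i - 1) \<and> m = sw i l)"
    proof
      assume "l = sw i m"
      then show "i < length l \<and> l ! i < l ! (i - 1) \<and> m = sw i l" using assms 1 by simp
    next
      assume "i < length l \<and> l ! i < l ! (i - 1) \<and> m = sw i l"
      then show "l = sw i m" using assms by simp
    qed
    moreover have "\<not> (l ! i < l ! (i - 1) \<and> m = l)" using 1 by auto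
    ultimately show ?thesis using 1 by (simp add: Pi_def Let_def sw_def)
  next
    case 2
    have "\<not> (i < length l \<and> l ! i < l ! (i - 1) \<and> m = sw i l)" using 2 assms by auto
    moreover have "\<not> (l ! i < l ! (i - 1) \<and> m = l)" using 2 by auto
    ultimately show ?thesis using 2 by (simp add: Pi_def Let_def)
  next
    case 3
    have "\<not> (i < length l \<and> l ! i < l ! (i - 1) \<and> m = sw i l)" using 3 assms by auto
    then show ?thesis using 3 by (auto simp: Pi_def Let_def)
  qed
qed

lemma Pi_sum:
  assumes z: "supp n r z" and i: "1 \<le> i" "i < r"
  shows "(\<Sum>m\<in>words n r. Pi i l m * z m) = rv i z l"
proof -
  have "(\<Sum>m\<in>words n r. Pi i l m * z m) =
     (\<Sum>m\<in>words n r. (if i < length l \<and> l ! i < l ! (i - 1) \<and> m = sw i l then z m else 0)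
                   + (if l ! i < l ! (i - 1) \<and> m = l then - z m else 0))"
    by (rule sum.cong) (auto simp: Pi_pointwise[OF i(1)] words_length i)
  also have "\<dots> = (\<Sum>m\<in>words n r. (if i < length l \<and> l ! i < l ! (i - 1) \<and> m = sw i l then z m else 0))
                   + (\<Sum>m\<in>words n r. (if l ! i < l ! (i - 1) \<and> m = l then - z m else 0))"
    by (rule sum.distrib)
  also have "\<dots> = (if i < length l \<and> l ! i < l ! (i - 1) \<and> sw i l \<in> words n r then z (sw i l) else 0)
         + (if l ! i < l ! (i - 1) \<and> l \<in> words n r then - z l else 0)"
  proof -
    have a: "(\<Sum>m\<in>words n r. (if i < length l \<and> l ! i < l ! (i - 1) \<and> m = sw i l then z m else 0))
       = (if i < length l \<and> l ! i < l ! (i - 1) \<and> sw i l \<in> words n r then z (sw i l) else 0)"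
      by (cases "i < length l \<and> l ! i < l ! (i - 1)") (auto simp: sum.delta intro!: sum.neutral)
    have b: "(\<Sum>m\<in>words n r. (if l ! i < l ! (i - 1) \<and> m = l then - z m else 0))
       = (if l ! i < l ! (i - 1) \<and> l \<in> words n r then - z l else 0)"
      by (cases "l ! i < l ! (i - 1)") (auto simp: sum.delta intro!: sum.neutral)
    show ?thesis using a b by simp
  qed
  also have "\<dots> = rv i z l"
    using z i unfolding supp_def rv_def
    by (auto simp: sw_words words_length)
  finally show ?thesis .
qed

lemma Pi_col_sum:
  assumes "k \<in> words n r" "1 \<le> i" "i < r"
  shows "(\<Sum>m\<in>words n r. M m * Pi i m k) =
     (if k ! (i - 1) < k ! i then M (sw i k) else if k ! (i - 1) = k ! i then 0 else - M k)"
proof -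
  have lk: "length k = r" using assms by (simp add: words_length)
  have sk: "sw i k \<in> words n r" using assms sw_words by blast
  consider "k ! (i - 1) < k ! i" | "k ! (i - 1) = k ! i" | "k ! i < k ! (i - 1)" by linarith
  then show ?thesis
  proof cases
    case 1
    then have "(\<Sum>m\<in>words n r. M m * Pi i m k) = (\<Sum>m\<in>words n r. if m = sw i k then M m else 0)"
      by (intro sum.cong) (auto simp: Pi_def Let_def sw_def)
    then show ?thesis using 1 sk by simp
  next
    case 2
    then show ?thesis by (simp add: Pi_def Let_def)
  next
    case 3
    then have "(\<Sum>m\<in>words n r. M m * Pi i m k) = (\<Sum>m\<in>words n r. if m = k then - M m else 0)"
      by (intro sum.cong) (auto simp: Pi_def Let_def)
    then show ?thesis using 3 assms by simp
  qed
qed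


lemma rv_zero[simp]: "rv i (\<lambda>_. 0) = (\<lambda>_. 0)" by (rule ext) (simp add: rv_def)

lemma rv_add: "rv i (\<lambda>l. f l + g l) = (\<lambda>l. rv i f l + rv i g l)"
  by (auto simp: rv_def)

lemma rv_diff: "rv i (\<lambda>l. f l - g l) = (\<lambda>l. rv i f l - rv i g l)"
  by (auto simp: rv_def)

lemma rv_scale: "rv i (\<lambda>l. c * f l) = (\<lambda>l. c * rv i f l)"
  by (auto simp: rv_def algebra_simps)

lemma rv_uminus: "rv i (\<lambda>l. - f l) = (\<lambda>l. - rv i f l)"
  by (auto simp: rv_def)

lemma rv_sum: "rv i (\<lambda>l. \<Sum>x\<in>A. f x l) = (\<lambda>l. \<Sum>x\<in>A. rv i (f x) l)"
  by (rule ext) (auto simp: rv_def sum_subtractf)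

lemma rv_Q: "rv j (rv j z) = (\<lambda>l. - rv j z l)"
proof
  fix l
  show "rv j (rv j z) l = - rv j z l"
  proof (cases "1 \<le> j \<and> j < length l \<and> l ! j < l ! (j - 1)")
    case True
    have g: "\<not> (sw j l ! j < sw j l ! (j - 1))" using True by simp
    then have "rv j z (sw j l) = 0" unfolding rv_def by simp
    then show ?thesis using True unfolding rv_def[of j "rv j z"] by simp
  next
    case False
    then show ?thesis by (auto simp: rv_def)
  qed
qed

lemma sw_comm: "1 \<le> i \<Longrightarrow> Suc i < j \<Longrightarrow> j < length l \<Longrightarrow> sw i (sw j l) = sw j (sw i l)"
proof -
  assume a: "1 \<le> i" "Suc i < j" "j < length l"
  have "sw j l ! i = l ! i" "sw j l ! (i - 1) = l ! (i - 1)" "sw i l ! j = l ! j" "sw i l ! (j - 1) = l ! (j - 1)"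
    using a by (auto simp: nth_sw)
  then show ?thesis unfolding sw_def[of i] sw_def[of j]
    using a by (simp add: sw_def list_update_swap)
qed

lemma rv_C: assumes "Suc i < j" shows "rv i (rv j z) = rv j (rv i z)"
proof
  fix l
  show "rv i (rv j z) l = rv j (rv i z) l"
  proof (cases "1 \<le> i \<and> j < length l")
    case True
    have e1: "sw i l ! j = l ! j" "sw i l ! (j - 1) = l ! (j - 1)"
      using True assms by (auto simp: nth_sw)
    have e2: "sw j l ! i = l ! i" "sw j l ! (i - 1) = l ! (i - 1)"
      using True assms by (auto simp: nth_sw)
    have c: "sw i (sw j l) = sw j (sw i l)" using True assms by (intro sw_comm) auto
    show ?thesis using True assms e1 e2 c unfolding rv_def by auto
  next
    case False
    then show ?thesis using assms unfolding rv_def by auto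
  qed
qed

lemma rv_at: "length p = i - 1 \<Longrightarrow> 1 \<le> i \<Longrightarrow>
   rv i z (p @ a # b # q) = (if b < a then z (p @ b # a # q) - z (p @ a # b # q) else 0)"
proof -
  assume a: "length p = i - 1" "1 \<le> i"
  have "sw i (p @ a # b # q) = p @ b # a # q"
    using a by (cases i) (auto simp: sw_def list_update_append nth_append)
  then show ?thesis using a by (auto simp: rv_def nth_append)
qed

lemma rv_at2: "length p = i - 1 \<Longrightarrow> 1 \<le> i \<Longrightarrow>
   rv (Suc i) z (p @ a # b # c # q) = (if c < b then z (p @ a # c # b # q) - z (p @ a # b # c # q) else 0)"
  using rv_at[of "p @ [a]" "Suc i" z b c q] by simp

lemma rv_B: "rv i (rv (Suc i) (rv i z)) = rv (Suc i) (rv i (rv (Suc i) z))"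
proof
  fix l
  show "rv i (rv (Suc i) (rv i z)) l = rv (Suc i) (rv i (rv (Suc i) z)) l"
  proof (cases "1 \<le> i \<and> Suc i < length l")
    case True
    define p where "p = take (i - 1) l"
    define q where "q = drop (i + 2) l"
    have d1: "drop (Suc i) l = l ! Suc i # drop (i + 2) l" using True
      by (metis Cons_nth_drop_Suc add_2_eq_Suc')
    have d2: "drop i l = l ! i # drop (Suc i) l" using True
      by (simp add: Cons_nth_drop_Suc)
    have d3: "drop (i - 1) l = l ! (i - 1) # drop i l"
    proof -
      have "i - 1 < length l" using True by arith
      from Cons_nth_drop_Suc[OF this] have "l ! (i - 1) # drop (Suc (i - 1)) l = drop (i - 1) l" .
      moreover have "Suc (i - 1) = i" using True by simp
      ultimately show ?thesis by simp
    qed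
    have l: "l = p @ l ! (i - 1) # l ! i # l ! (Suc i) # q"
      unfolding p_def q_def using d1 d2 d3 by (metis append_take_drop_id)
    have lp: "length p = i - 1" using True unfolding p_def by (auto simp: min_def)
    obtain a b c where abc: "l = p @ a # b # c # q" using l by blast
    show ?thesis
      unfolding abc using True lp
      by (auto simp: rv_at rv_at2 algebra_simps)
  next
    case False
    then show ?thesis unfolding rv_def by auto
  qed
qed

lemma rv_single:
  assumes "1 \<le> j" "j < length w"
  shows "rv j (single w) = (if w ! (j - 1) < w ! j then single (sw j w)
     else if w ! (j - 1) = w ! j then (\<lambda>_. 0) else (\<lambda>l. - single w l))"
proof -
  have eq: "\<And>l. (sw j l = w) = (length l = length w \<and> l = sw j w)"
    using assms by (metis length_sw sw_sw)
  consider "w ! (j - 1) < w ! j" | "w ! (j - 1) = w ! j" | "w ! j < w ! (j - 1)" by linarith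
  then show ?thesis
  proof cases
    case 1
    have "rv j (single w) l = single (sw j w) l" for l
    proof (cases "l = sw j w")
      case True
      have ne: "sw j w \<noteq> w" using 1 assms sw_neq[of j w] by simp
      have g: "1 \<le> j \<and> j < length l \<and> l ! j < l ! (j - 1)" using True assms 1 by simp
      have s: "sw j l = w" using True assms by simp
      have "rv j (single w) l = single w (sw j l) - single w l" using g unfolding rv_def by simp
      also have "\<dots> = 1" using s True ne by (simp add: single_def)
      finally show ?thesis using True by (simp add: single_def)
    next
      case False
      then have "sw j l \<noteq> w" using eq by blast
      then show ?thesis using False 1 unfolding rv_def single_def by auto
    qed
    then show ?thesis using 1 by auto
  next
    case 2
    have "rv j (single w) l = 0" for l
    proof -
      have "sw j l = w \<Longrightarrow> \<not> (l ! j < l ! (j - 1))"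
        using 2 eq assms sw_same[of w j] by auto
      then show ?thesis using 2 unfolding rv_def single_def by auto
    qed
    then show ?thesis using 2 by auto
  next
    case 3
    have "rv j (single w) l = - single w l" for l
    proof -
      have "\<not> (l ! j < l ! (j - 1))" if a: "sw j l = w" "1 \<le> j" "j < length l"
      proof -
        have "w ! j = l ! (j - 1)" "w ! (j - 1) = l ! j" using a by auto
        then show ?thesis using 3 by simp
      qed
      then show ?thesis unfolding rv_def single_def using 3 assms by auto
    qed
    then show ?thesis using 3 by auto
  qed
qed

lemma supp_rv: "supp n r z \<Longrightarrow> supp n r (rv i z)"
  unfolding supp_def
proof (intro allI impI)
  fix m assume z: "\<forall>m. m \<notin> words n r \<longrightarrow> z m = 0" and m: "m \<notin> words n r"
  show "rv i z m = 0"
  proof (cases "1 \<le> i \<and> i < length m \<and> m ! i < m ! (i - 1)")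
    case True
    have "sw i m \<notin> words n r"
    proof
      assume "sw i m \<in> words n r"
      then have "length m = r" by (metis length_sw words_length)
      with \<open>sw i m \<in> words n r\<close> True have "m \<in> words n r" using sw_words by blast
      with m show False by simp
    qed
    then show ?thesis using True z m by (simp add: rv_def)
  next
    case False
    then show ?thesis by (auto simp: rv_def)
  qed
qed


lemma tens_Nil[simp]: "tens a y [] = 0" by (simp add: tens_def)
lemma tens_Cons[simp]: "tens a y (b # l) = (if b = a then y l else 0)" by (simp add: tens_def)
lemma tens_zero[simp]: "tens a (\<lambda>_. 0) = (\<lambda>_. 0)" by (rule ext) (simp add: tens_def split: list.split)
lemma tens_uminus: "tens a (\<lambda>l. - y l) = (\<lambda>l. - tens a y l)" by (rule ext) (simp add: tens_def split: list.split)
lemma tens_add: "tens a (\<lambda>l. y l + z l) = (\<lambda>l. tens a y l + tens a z l)" by (rule ext) (simp add: tens_def split: list.split)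

definition actv :: "gen \<Rightarrow> nat list \<Rightarrow> vec" where
  "actv g k = (case g of E i \<Rightarrow> eact i k | F i \<Rightarrow> fact_act i k | K i \<Rightarrow> kact i k)"

lemma rho_actv: "rho g l k = actv g k l" by (simp add: rho_def actv_def split: gen.split)

lemma kact_local: "kact i k l \<noteq> 0 \<Longrightarrow> l = k"
proof (induction k arbitrary: l)
  case Nil then show ?case by (simp add: single_def split: if_splits)
next
  case (Cons a w)
  then show ?case by (cases l) (auto split: if_splits)
qed

lemma single_local: "single k l \<noteq> 0 \<Longrightarrow> l = k" by (simp add: single_def split: if_splits)

lemma eact_local: "eact i k l \<noteq> 0 \<Longrightarrow> \<exists>p<length k. k ! p = Suc i \<and> l = k[p := i]"
proof (induction k arbitrary: l)
  case Nil then show ?case by simp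
next
  case (Cons a w)
  show ?case
  proof (cases l)
    case Nil then show ?thesis using Cons by (auto split: if_splits)
  next
    case (Cons b l')
    note lc = this
    show ?thesis
    proof (cases "b = a \<and> eact i w l' \<noteq> 0")
      case True
      then obtain p where "p < length w" "w ! p = Suc i" "l' = w[p := i]" using Cons.IH by blast
      then show ?thesis using True lc by (intro exI[of _ "Suc p"]) auto
    next
      case False
      then have "a = Suc i \<and> b = i \<and> kact i w l' \<noteq> 0" using Cons.prems lc by (auto split: if_splits)
      then show ?thesis using lc kact_local by (intro exI[of _ 0]) auto
    qed
  qed
qed

lemma fact_local: "fact_act i k l \<noteq> 0 \<Longrightarrow> \<exists>p<length k. k ! p = i \<and> l = k[p := Suc i]"
proof (induction k arbitrary: l)
  case Nil then show ?case by simp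
next
  case (Cons a w)
  show ?case
  proof (cases l)
    case Nil then show ?thesis using Cons by (auto split: if_splits)
  next
    case (Cons b l')
    note lc = this
    show ?thesis
    proof (cases "a \<noteq> Suc i \<and> b = a \<and> fact_act i w l' \<noteq> 0")
      case True
      then obtain p where "p < length w" "w ! p = i" "l' = w[p := Suc i]" using Cons.IH by blast
      then show ?thesis using True lc by (intro exI[of _ "Suc p"]) auto
    next
      case False
      then have "a = i \<and> b = Suc i \<and> single w l' \<noteq> 0" using Cons.prems lc by (auto split: if_splits)
      then show ?thesis using lc single_local by (intro exI[of _ 0]) auto
    qed
  qed
qed

lemma actv_supp:
  assumes "k \<in> words n r" "g \<in> gens n"
  shows "supp n r (actv g k)"
  unfolding supp_def
proof (intro allI impI)
  fix l assume l: "l \<notin> words n r"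
  show "actv g k l = 0"
  proof (rule ccontr)
    assume nz: "actv g k l \<noteq> 0"
    have kw: "length k = r" "set k \<subseteq> {1..n}" using assms by (auto simp: words_def)
    from assms(2) consider (e) i where "g = E i" "1 \<le> i" "i < n" | (f) i where "g = F i" "1 \<le> i" "i < n"
      | (k) i where "g = K i" "1 \<le> i" "i \<le> n" by (auto simp: gens_def)
    then show False
    proof cases
      case e
      from nz e have "eact i k l \<noteq> 0" by (simp add: actv_def)
      then obtain p where p: "p < length k" "l = k[p := i]" using eact_local by blast
      have "set l \<subseteq> {1..n}" using p kw e set_update_subset_insert[of k p i] by auto
      then show False using l p kw by (simp add: words_def)
    next
      case f
      from nz f have "fact_act i k l \<noteq> 0" by (simp add: actv_def)
      then obtain p where p: "p < length k" "l = k[p := Suc i]" using fact_local by blast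
      have "set l \<subseteq> {1..n}" using p kw f set_update_subset_insert[of k p "Suc i"] by auto
      then show False using l p kw by (simp add: words_def)
    next
      case k
      then have "l = k" using nz kact_local by (auto simp: actv_def)
      then show False using l assms by simp
    qed
  qed
qed

lemma rv_tens: "2 \<le> j \<Longrightarrow> rv j (tens a y) = tens a (rv (j - 1) y)"
proof
  fix l assume j: "2 \<le> j"
  then obtain m where m: "j = Suc (Suc m)" by (metis add_2_eq_Suc le_Suc_ex)
  show "rv j (tens a y) l = tens a (rv (j - 1) y) l"
  proof (cases l)
    case Nil then show ?thesis by (simp add: rv_def)
  next
    case (Cons b l')
    then show ?thesis using j m by (auto simp: rv_def sw_Cons)
  qed
qed

lemma rv1: "rv (Suc 0) G l = (case l of c # d # u \<Rightarrow> if d < c then G (d # c # u) - G (c # d # u) else 0 | _ \<Rightarrow> 0)"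
  by (cases l rule: remdups_adj.cases) (auto simp: rv_def)

definition piv :: "(nat list \<Rightarrow> vec) \<Rightarrow> nat list \<Rightarrow> nat \<Rightarrow> vec" where
  "piv f k j = (if k ! (j - 1) < k ! j then f (sw j k) else if k ! (j - 1) = k ! j then (\<lambda>_. 0)
     else (\<lambda>l. - f k l))"

lemma piv_Cons: "2 \<le> j \<Longrightarrow> j < Suc (length w) \<Longrightarrow>
  piv f (a # w) j = (if w ! (j - 2) < w ! (j - 1) then f (a # sw (j - 1) w) else if w ! (j - 2) = w ! (j - 1) then (\<lambda>_. 0)
     else (\<lambda>l. - f (a # w) l))"
  by (cases j; cases "j - 1") (auto simp: piv_def sw_Cons)

lemma single_comm: "1 \<le> j \<Longrightarrow> j < length k \<Longrightarrow> rv j (single k) = piv single k j"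
  by (simp add: rv_single piv_def)

lemma kact_comm: "1 \<le> j \<Longrightarrow> j < length k \<Longrightarrow> rv j (kact i k) = piv (kact i) k j"
proof (induction k arbitrary: j)
  case Nil then show ?case by simp
next
  case (Cons a w)
  show ?case
  proof (cases "j = 1")
    case True
    then obtain b w' where w: "w = b # w'" using Cons.prems by (cases w) auto
    show ?thesis
    proof
      fix l
      show "rv j (kact i (a # w)) l = piv (kact i) (a # w) j l"
        using True unfolding w
        by (cases l rule: remdups_adj.cases) (auto simp: rv1 piv_def)
    qed
  next
    case False
    then have j2: "2 \<le> j" using Cons.prems by simp
    have ih: "rv (j - 1) (kact i w) = piv (kact i) w (j - 1)" using Cons j2 by (intro Cons.IH) auto
    show ?thesis
    proof (cases "a = i")
      case True
      then show ?thesis using j2 Cons.prems by (auto simp: piv_def sw_Cons fun_eq_iff)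
    next
      case False
      have "rv j (kact i (a # w)) = tens a (rv (j - 1) (kact i w))"
        using False j2 by (simp add: rv_tens)
      also have "\<dots> = piv (kact i) (a # w) j"
        unfolding ih using False j2 Cons.prems
        by (cases j; cases "j - 1") (auto simp: piv_def sw_Cons tens_uminus)
      finally show ?thesis .
    qed
  qed
qed

lemma rv_fun_cong: "rv j (\<lambda>l. f l) = rv j f" by simp

lemma eact_comm: "1 \<le> j \<Longrightarrow> j < length k \<Longrightarrow> rv j (eact i k) = piv (eact i) k j"
proof (induction k arbitrary: j)
  case Nil then show ?case by simp
next
  case (Cons a w)
  show ?case
  proof (cases "j = 1")
    case True
    then obtain b w' where w: "w = b # w'" using Cons.prems by (cases w) auto
    show ?thesis
    proof
      fix l
      show "rv j (eact i (a # w)) l = piv (eact i) (a # w) j l"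
        using True unfolding w
        by (cases l rule: remdups_adj.cases) (auto simp: rv1 piv_def)
    qed
  next
    case False
    then have j2: "2 \<le> j" using Cons.prems by simp
    have ih: "rv (j - 1) (eact i w) = piv (eact i) w (j - 1)" using Cons j2 by (intro Cons.IH) auto
    have ihk: "rv (j - 1) (kact i w) = piv (kact i) w (j - 1)" using Cons j2 by (intro kact_comm) auto
    show ?thesis
    proof (cases "a = Suc i")
      case True
      have "rv j (eact i (a # w)) = (\<lambda>l. tens a (rv (j - 1) (eact i w)) l + tens i (rv (j - 1) (kact i w)) l)"
        using True j2 by (simp add: rv_add rv_tens)
      also have "\<dots> = piv (eact i) (a # w) j"
        unfolding ih ihk using True j2 Cons.prems
        by (cases j; cases "j - 1") (auto simp: piv_def sw_Cons tens_uminus)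
      finally show ?thesis .
    next
      case False
      have "rv j (eact i (a # w)) = tens a (rv (j - 1) (eact i w))"
        using False j2 by (simp add: rv_tens)
      also have "\<dots> = piv (eact i) (a # w) j"
        unfolding ih using False j2 Cons.prems
        by (cases j; cases "j - 1") (auto simp: piv_def sw_Cons tens_uminus)
      finally show ?thesis .
    qed
  qed
qed

lemma fact_comm: "1 \<le> j \<Longrightarrow> j < length k \<Longrightarrow> rv j (fact_act i k) = piv (fact_act i) k j"
proof (induction k arbitrary: j)
  case Nil then show ?case by simp
next
  case (Cons a w)
  show ?case
  proof (cases "j = 1")
    case True
    then obtain b w' where w: "w = b # w'" using Cons.prems by (cases w) auto
    show ?thesis
    proof
      fix l
      show "rv j (fact_act i (a # w)) l = piv (fact_act i) (a # w) j l"
        using True unfolding w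
        by (cases l rule: remdups_adj.cases) (auto simp: rv1 piv_def single_def)
    qed
  next
    case False
    then have j2: "2 \<le> j" using Cons.prems by simp
    have ih: "rv (j - 1) (fact_act i w) = piv (fact_act i) w (j - 1)" using Cons j2 by (intro Cons.IH) auto
    have ihs: "rv (j - 1) (single w) = piv single w (j - 1)" using Cons j2 by (intro single_comm) auto
    consider "a = Suc i" | "a = i" | "a \<noteq> i \<and> a \<noteq> Suc i" by blast
    then show ?thesis
    proof cases
      case 1
      have "fact_act i (a # w) = (\<lambda>_. 0)" using 1 by (rule_tac ext) simp
      moreover have "fact_act i (a # sw (j - 1) w) = (\<lambda>_. 0)" using 1 by (rule_tac ext) simp
      ultimately show ?thesis using j2 Cons.prems by (simp add: piv_Cons)
    next
      case 2
      have "rv j (fact_act i (a # w)) = (\<lambda>l. tens a (rv (j - 1) (fact_act i w)) l + tens (Suc i) (rv (j - 1) (single w)) l)"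
        using 2 j2 by (simp add: rv_add rv_tens)
      also have "\<dots> = piv (fact_act i) (a # w) j"
        unfolding ih ihs using 2 j2 Cons.prems
        by (cases j; cases "j - 1") (auto simp: piv_def sw_Cons tens_uminus)
      finally show ?thesis .
    next
      case 3
      have "rv j (fact_act i (a # w)) = tens a (rv (j - 1) (fact_act i w))"
        using 3 j2 by (simp add: rv_tens)
      also have "\<dots> = piv (fact_act i) (a # w) j"
        unfolding ih using 3 j2 Cons.prems
        by (cases j; cases "j - 1") (auto simp: piv_def sw_Cons tens_uminus)
      finally show ?thesis .
    qed
  qed
qed

lemma actv_comm: "1 \<le> j \<Longrightarrow> j < length k \<Longrightarrow> rv j (actv g k) = piv (actv g) k j"
  by (cases g) (simp_all add: actv_def eact_comm fact_comm kact_comm piv_def)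


definition fdesc :: "nat list \<Rightarrow> nat" where
  "fdesc k = (LEAST j. 1 \<le> j \<and> j < length k \<and> k ! j < k ! (j - 1))"

lemma fdesc: "\<not> sorted k \<Longrightarrow> 1 \<le> fdesc k \<and> fdesc k < length k \<and> k ! fdesc k < k ! (fdesc k - 1)"
  unfolding fdesc_def using not_sorted_desc[of k] by (metis (mono_tags, lifting) LeastI_ex)

lemma fdesc_least: "1 \<le> j \<Longrightarrow> j < length k \<Longrightarrow> k ! j < k ! (j - 1) \<Longrightarrow> fdesc k \<le> j"
  unfolding fdesc_def by (rule Least_le) simp

lemma ninv_fdesc: "\<not> sorted k \<Longrightarrow> ninv (sw (fdesc k) k) < ninv k"
  using fdesc[of k] ninv_sw_desc[of "fdesc k" k] by simp

function col :: "nat list \<Rightarrow> vec \<Rightarrow> nat list \<Rightarrow> vec" where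
  "col s y k = (if mset k \<noteq> mset s then (\<lambda>_. 0) else if sorted k then y
     else rv (fdesc k) (col s y (sw (fdesc k) k)))"
  by auto
termination
  by (relation "measure (\<lambda>(s, y, k). ninv k)") (auto simp: ninv_fdesc)

declare col.simps[simp del]

lemma col_other: "mset k \<noteq> mset s \<Longrightarrow> col s y k = (\<lambda>_. 0)"
  by (subst col.simps) simp

lemma col_sorted: "mset k = mset s \<Longrightarrow> sorted k \<Longrightarrow> col s y k = y"
  by (subst col.simps) simp

lemma col_step: "mset k = mset s \<Longrightarrow> \<not> sorted k \<Longrightarrow> col s y k = rv (fdesc k) (col s y (sw (fdesc k) k))"
  by (subst col.simps) simp

lemma sw_braid: "1 \<le> i \<Longrightarrow> Suc i < length k \<Longrightarrow>
   sw (Suc i) (sw i (sw (Suc i) k)) = sw i (sw (Suc i) (sw i k))"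
  by (rule nth_equalityI) (auto simp: nth_sw)

lemma desc_sw_far: "1 \<le> i \<Longrightarrow> i < length k \<Longrightarrow> 1 \<le> j \<Longrightarrow> j < length k \<Longrightarrow> Suc i < j \<or> Suc j < i \<Longrightarrow>
   sw i k ! j = k ! j \<and> sw i k ! (j - 1) = k ! (j - 1)"
  by (auto simp: nth_sw)

locale hsetup =
  fixes n r :: nat and s :: "nat list" and y :: vec
  assumes s_words: "s \<in> words n r" and s_sorted: "sorted s" and y_supp: "supp n r y"
    and y_inv: "\<And>j. 1 \<le> j \<Longrightarrow> j < r \<Longrightarrow> s ! (j - 1) = s ! j \<Longrightarrow> rv j y = (\<lambda>_. 0)"
begin

abbreviation "cl \<equiv> col s y"

lemma len_s: "length s = r" using s_words by (simp add: words_length)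

lemma mset_len: "mset k = mset s \<Longrightarrow> length k = r"
  by (metis len_s size_mset)

lemma sorted_is_s: "mset k = mset s \<Longrightarrow> sorted k \<Longrightarrow> k = s"
  using s_sorted sorted_mset_eq by blast

lemma colD: "mset k = mset s \<Longrightarrow> 1 \<le> j \<Longrightarrow> j < length k \<Longrightarrow> k ! j < k ! (j - 1) \<Longrightarrow>
  cl k = rv j (cl (sw j k))"
proof (induction "ninv k" arbitrary: k j rule: less_induct)
  case less
  have ns: "\<not> sorted k" using less.prems sorted_no_desc[of k j] by fastforce
  define i where "i = fdesc k"
  have i: "1 \<le> i" "i < length k" "k ! i < k ! (i - 1)" using fdesc[OF ns] unfolding i_def by auto
  have ij: "i \<le> j" unfolding i_def using less.prems by (intro fdesc_least) auto
  have step: "cl k = rv i (cl (sw i k))" using col_step[OF less.prems(1) ns] unfolding i_def .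
  have ms: "\<And>t. 1 \<le> t \<Longrightarrow> t < length k \<Longrightarrow> mset (sw t k) = mset s" using less.prems by simp
  consider "i = j" | "Suc i < j" | "j = Suc i" using ij by linarith
  then show ?case
  proof cases
    case 1 then show ?thesis using step by simp
  next
    case 2
    let ?ki = "sw i k" and ?kj = "sw j k"
    have a1: "?ki ! j < ?ki ! (j - 1)" using 2 i less.prems by (auto simp: nth_sw)
    have a2: "?kj ! i < ?kj ! (i - 1)" using 2 i less.prems by (auto simp: nth_sw)
    have n1: "ninv ?ki < ninv k" using ninv_sw_desc[of i k] i by simp
    have n2: "ninv ?kj < ninv k" using ninv_sw_desc[of j k] less.prems by simp
    have h1: "cl ?ki = rv j (cl (sw j ?ki))"
      using less.hyps[OF n1, of j] a1 ms[of i] i less.prems by simp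
    have h2: "cl ?kj = rv i (cl (sw i ?kj))"
      using less.hyps[OF n2, of i] a2 ms[of j] i less.prems by simp
    have c: "sw i ?kj = sw j ?ki" using sw_comm[of i j k] 2 i less.prems by simp
    show ?thesis using step h1 h2 c rv_C[OF 2] by simp
  next
    case 3
    let ?x = "k ! (i - 1)" and ?y = "k ! i" and ?z = "k ! Suc i"
    have xyz: "?y < ?x" "?z < ?y" using i less.prems 3 by auto
    define k1 where "k1 = sw i k"
    define k2 where "k2 = sw (Suc i) k1"
    define k3 where "k3 = sw i k2"
    define k1' where "k1' = sw (Suc i) k"
    define k2' where "k2' = sw i k1'"
    define k3' where "k3' = sw (Suc i) k2'"
    have L: "Suc i < length k" using 3 less.prems by simp
    have v1: "k1 ! (i - 1) = ?y" "k1 ! i = ?x" "k1 ! Suc i = ?z" "length k1 = length k"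
      unfolding k1_def using i L by (auto simp: nth_sw)
    have v2: "k2 ! (i - 1) = ?y" "k2 ! i = ?z" "k2 ! Suc i = ?x" "length k2 = length k"
      unfolding k2_def using i L v1 by (auto simp: nth_sw)
    have v1': "k1' ! (i - 1) = ?x" "k1' ! i = ?z" "k1' ! Suc i = ?y" "length k1' = length k"
      unfolding k1'_def using i L by (auto simp: nth_sw)
    have v2': "k2' ! (i - 1) = ?z" "k2' ! i = ?x" "k2' ! Suc i = ?y" "length k2' = length k"
      unfolding k2'_def using i L v1' by (auto simp: nth_sw)
    have m1: "mset k1 = mset s" "mset k2 = mset s" "mset k1' = mset s" "mset k2' = mset s"
      unfolding k2_def k1_def k2'_def k1'_def using i L less.prems(1) by auto
    have n1: "ninv k1 < ninv k" unfolding k1_def using ninv_sw_desc[of i k] i by simp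
    have n2: "ninv k2 < ninv k1" unfolding k2_def using ninv_sw_desc[of "Suc i" k1] i L v1 xyz by simp
    have n1': "ninv k1' < ninv k" unfolding k1'_def using ninv_sw_desc[of "Suc i" k] i L xyz by simp
    have n2': "ninv k2' < ninv k1'" unfolding k2'_def using ninv_sw_desc[of i k1'] i L v1' xyz by simp
    have h1: "cl k1 = rv (Suc i) (cl k2)"
      unfolding k2_def using less.hyps[OF n1, of "Suc i"] m1 i L v1 xyz by simp
    have h2: "cl k2 = rv i (cl k3)"
      unfolding k3_def using less.hyps[of k2 i] n1 n2 m1 i L v2 xyz by simp
    have h1': "cl k1' = rv i (cl k2')"
      unfolding k2'_def using less.hyps[OF n1', of i] m1 i L v1' xyz by simp
    have h2': "cl k2' = rv (Suc i) (cl k3')"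
      unfolding k3'_def using less.hyps[of k2' "Suc i"] n1' n2' m1 i L v2' xyz by simp
    have e: "k3' = k3" unfolding k3'_def k3_def k2'_def k2_def k1'_def k1_def
      using sw_braid[of i k] i L by simp
    have "cl k = rv i (rv (Suc i) (rv i (cl k3)))" using step h1 h2 unfolding k1_def by simp
    also have "\<dots> = rv (Suc i) (rv i (rv (Suc i) (cl k3)))" by (rule rv_B)
    also have "\<dots> = rv (Suc i) (cl k1')" using h1' h2' e by simp
    finally show ?thesis unfolding k1'_def using 3 by simp
  qed
qed

lemma colE: "mset k = mset s \<Longrightarrow> 1 \<le> j \<Longrightarrow> j < length k \<Longrightarrow> k ! (j - 1) = k ! j \<Longrightarrow>
  rv j (cl k) = (\<lambda>_. 0)"
proof (induction "ninv k" arbitrary: k j rule: less_induct)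
  case less
  show ?case
  proof (cases "sorted k")
    case True
    then have "k = s" using sorted_is_s less.prems by simp
    then show ?thesis using col_sorted[of k s y] True y_inv less.prems len_s by simp
  next
    case ns: False
    define i where "i = fdesc k"
    have i: "1 \<le> i" "i < length k" "k ! i < k ! (i - 1)" using fdesc[OF ns] unfolding i_def by auto
    have step: "cl k = rv i (cl (sw i k))" using col_step[OF less.prems(1) ns] unfolding i_def .
    have ij: "i \<noteq> j" using i less.prems by auto
    consider "Suc i < j \<or> Suc j < i" | "j = Suc i" | "i = Suc j" using ij by linarith
    then show ?thesis
    proof cases
      case 1
      have a1: "sw i k ! (j - 1) = sw i k ! j" using desc_sw_far[of i k j] 1 i less.prems by simp
      have n1: "ninv (sw i k) < ninv k" using ninv_sw_desc[of i k] i by simp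
      have h: "rv j (cl (sw i k)) = (\<lambda>_. 0)" using less.hyps[OF n1, of j] a1 i less.prems by simp
      have "rv j (cl k) = rv i (rv j (cl (sw i k)))"
        using step 1 rv_C[of i j] rv_C[of j i] by auto
      then show ?thesis using h by simp
    next
      case 2
      let ?x = "k ! (i - 1)" and ?y = "k ! i"
      have L: "Suc i < length k" using 2 less.prems by simp
      have yy: "k ! Suc i = ?y" using less.prems 2 by simp
      define k1 where "k1 = sw i k"
      define k2 where "k2 = sw (Suc i) k1"
      have v1: "k1 ! (i - 1) = ?y" "k1 ! i = ?x" "k1 ! Suc i = ?y" "length k1 = length k"
        unfolding k1_def using i L yy by (auto simp: nth_sw)
      have v2: "k2 ! (i - 1) = ?y" "k2 ! i = ?y" "k2 ! Suc i = ?x"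
        unfolding k2_def using i L v1 by (auto simp: nth_sw)
      have m1: "mset k1 = mset s" "mset k2 = mset s"
        unfolding k2_def k1_def using i L less.prems(1) by auto
      have n1: "ninv k1 < ninv k" unfolding k1_def using ninv_sw_desc[of i k] i by simp
      have n2: "ninv k2 < ninv k1" unfolding k2_def k1_def using ninv_sw_desc[of "Suc i" "sw i k"] i L v1 unfolding k1_def by simp
      have h1: "cl k1 = rv (Suc i) (cl k2)"
        unfolding k2_def using colD[of k1 "Suc i"] m1 i L v1 by (simp add: k1_def)
      have h2: "rv i (cl k2) = (\<lambda>_. 0)"
        using less.hyps[of k2 i] n1 n2 m1 i L v2 unfolding k2_def k1_def by simp
      have "rv j (cl k) = rv (Suc i) (rv i (rv (Suc i) (cl k2)))"
        using step h1 2 unfolding k1_def by simp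
      also have "\<dots> = rv i (rv (Suc i) (rv i (cl k2)))" by (rule rv_B[symmetric])
      finally show ?thesis using h2 by simp
    next
      case 3
      let ?x = "k ! j" and ?z = "k ! i"
      have L: "Suc j < length k" using 3 i by simp
      have j1: "1 \<le> j" using less.prems by simp
      have xx: "k ! (j - 1) = ?x" using less.prems by simp
      have iv: "k ! Suc j < k ! j" using i 3 by simp
      define k1 where "k1 = sw (Suc j) k"
      define k2 where "k2 = sw j k1"
      have v1: "k1 ! (j - 1) = ?x" "k1 ! j = ?z" "k1 ! Suc j = ?x" "length k1 = length k"
        unfolding k1_def using j1 L xx 3 by (auto simp: nth_sw)
      have v2: "k2 ! (j - 1) = ?z" "k2 ! j = ?x" "k2 ! Suc j = ?x"
        unfolding k2_def using j1 L v1 by (auto simp: nth_sw)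
      have m1: "mset k1 = mset s" "mset k2 = mset s"
        unfolding k2_def k1_def using j1 L less.prems(1) by auto
      have n1: "ninv k1 < ninv k" unfolding k1_def using ninv_sw_desc[of "Suc j" k] L iv by simp
      have n2: "ninv k2 < ninv k1" unfolding k2_def using ninv_sw_desc[of j k1] j1 L v1 iv 3
        by (simp add: k1_def)
      have h1: "cl k1 = rv j (cl k2)"
        unfolding k2_def using colD[of k1 j] m1 j1 L v1 iv 3 by (simp add: k1_def)
      have h2: "rv (Suc j) (cl k2) = (\<lambda>_. 0)"
        using less.hyps[of k2 "Suc j"] n1 n2 m1 j1 L v2 unfolding k2_def k1_def by simp
      have "rv j (cl k) = rv j (rv (Suc j) (rv j (cl k2)))"
        using step h1 3 unfolding k1_def by simp
      also have "\<dots> = rv (Suc j) (rv j (rv (Suc j) (cl k2)))" by (rule rv_B)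
      finally show ?thesis using h2 by simp
    qed
  qed
qed

lemma col_comm: "length k = r \<Longrightarrow> 1 \<le> j \<Longrightarrow> j < r \<Longrightarrow> rv j (cl k) = piv cl k j"
proof -
  assume a: "length k = r" "1 \<le> j" "j < r"
  show ?thesis
  proof (cases "mset k = mset s")
    case False
    then have "mset (sw j k) \<noteq> mset s" using a by simp
    then show ?thesis using False a by (simp add: col_other piv_def)
  next
    case True
    consider "k ! (j - 1) < k ! j" | "k ! (j - 1) = k ! j" | "k ! j < k ! (j - 1)" by linarith
    then show ?thesis
    proof cases
      case 1
      have "cl (sw j k) = rv j (cl (sw j (sw j k)))"
        using colD[of "sw j k" j] True a 1 by simp
      then show ?thesis using 1 a by (simp add: piv_def)
    next
      case 2
      then show ?thesis using colE[of k j] True a by (simp add: piv_def)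
    next
      case 3
      have "cl k = rv j (cl (sw j k))" using colD[of k j] True a 3 by simp
      then have "rv j (cl k) = (\<lambda>l. - cl k l)" by (metis rv_Q)
      then show ?thesis using 3 by (simp add: piv_def)
    qed
  qed
qed

lemma col_supp: "supp n r (cl k)"
proof (induction "ninv k" arbitrary: k rule: less_induct)
  case less
  show ?case
  proof (cases "mset k = mset s")
    case False then show ?thesis by (simp add: col_other supp_def)
  next
    case True
    show ?thesis
    proof (cases "sorted k")
      case True' : True
      then show ?thesis using True y_supp by (simp add: col_sorted)
    next
      case False
      then show ?thesis using True col_step[OF True False] less.hyps[OF ninv_fdesc[OF False]] supp_rv
        by metis
    qed
  qed
qed

lemma col_unique:
  assumes asc: "\<And>k j. k \<in> words n r \<Longrightarrow> mset k = mset s \<Longrightarrow> 1 \<le> j \<Longrightarrow> j < r \<Longrightarrow>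
        k ! (j - 1) < k ! j \<Longrightarrow> c (sw j k) = rv j (c k)"
    and cs: "c s = y"
  shows "k \<in> words n r \<Longrightarrow> mset k = mset s \<Longrightarrow> c k = cl k"
proof (induction "ninv k" arbitrary: k rule: less_induct)
  case less
  show ?case
  proof (cases "sorted k")
    case True
    then have "k = s" using sorted_is_s less.prems by simp
    then show ?thesis using cs col_sorted[of s s y] s_sorted by simp
  next
    case False
    define i where "i = fdesc k"
    have i: "1 \<le> i" "i < length k" "k ! i < k ! (i - 1)" using fdesc[OF False] unfolding i_def by auto
    have lk: "length k = r" using less.prems by (simp add: words_length)
    let ?k' = "sw i k"
    have k'w: "?k' \<in> words n r" using i lk less.prems sw_words by simp
    have m': "mset ?k' = mset s" using i less.prems by simp
    have n': "ninv ?k' < ninv k" using ninv_sw_desc[of i k] i by simp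
    have asc': "?k' ! (i - 1) < ?k' ! i" using i by simp
    have "c k = c (sw i ?k')" using i by simp
    also have "\<dots> = rv i (c ?k')" using asc[OF k'w m' i(1) _ asc'] i lk by simp
    also have "\<dots> = rv i (cl ?k')" using less.hyps[OF n' k'w m'] by simp
    also have "\<dots> = cl k" using col_step[OF less.prems(2) False] unfolding i_def by simp
    finally show ?thesis .
  qed
qed

definition Mc :: "nat list \<Rightarrow> nat list \<Rightarrow> complex" where
  "Mc l k = (if k \<in> words n r then cl k l else 0)"

lemma Mc_H_endo: "is_H_endo n r Mc"
  unfolding is_H_endo_def
proof (intro conjI ballI allI impI)
  fix l k assume "l \<notin> words n r \<or> k \<notin> words n r"
  then show "Mc l k = 0" using col_supp unfolding Mc_def supp_def by auto
next
  fix i l k assume i: "i \<in> {1..<r}" and l: "l \<in> words n r" and k: "k \<in> words n r"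
  have lk: "length k = r" using k by (simp add: words_length)
  have "(\<Sum>m\<in>words n r. Mc l m * Pi i m k) =
     (if k ! (i - 1) < k ! i then Mc l (sw i k) else if k ! (i - 1) = k ! i then 0 else - Mc l k)"
    using Pi_col_sum[of k n r i "\<lambda>m. Mc l m"] k i by simp
  also have "\<dots> = piv cl k i l"
    using k i lk sw_words[of i r k n] by (auto simp: Mc_def piv_def)
  also have "\<dots> = rv i (cl k) l" using col_comm[of k i] lk i by simp
  also have "\<dots> = (\<Sum>m\<in>words n r. Pi i l m * Mc m k)"
    using Pi_sum[of n r "cl k" i l] col_supp i k by (simp add: Mc_def)
  finally show "(\<Sum>m\<in>words n r. Mc l m * Pi i m k) = (\<Sum>m\<in>words n r. Pi i l m * Mc m k)" .
qed

end

lemma H_endo_asc: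
  assumes M: "is_H_endo n r M" and k: "k \<in> words n r" and j: "1 \<le> j" "j < r" and asc: "k ! (j - 1) < k ! j"
  shows "(\<lambda>l. M l (sw j k)) = rv j (\<lambda>l. M l k)"
proof
  fix l
  have sM: "supp n r (\<lambda>l. M l k)" using M unfolding is_H_endo_def supp_def by auto
  show "M l (sw j k) = rv j (\<lambda>l. M l k) l"
  proof (cases "l \<in> words n r")
    case True
    have "(\<Sum>m\<in>words n r. M l m * Pi j m k) = (\<Sum>m\<in>words n r. Pi j l m * M m k)"
      using M True k j unfolding is_H_endo_def by auto
    moreover have "(\<Sum>m\<in>words n r. M l m * Pi j m k) = M l (sw j k)"
      using Pi_col_sum[of k n r j "\<lambda>m. M l m"] k j asc by simp
    moreover have "(\<Sum>m\<in>words n r. Pi j l m * M m k) = rv j (\<lambda>l. M l k) l"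
      using Pi_sum[OF sM j] by simp
    ultimately show ?thesis by simp
  next
    case False
    then show ?thesis using M supp_rv[OF sM, of j] unfolding is_H_endo_def supp_def by auto
  qed
qed


definition cut :: "(nat \<Rightarrow> nat) \<Rightarrow> nat \<Rightarrow> nat" where
  "cut mu t = (\<Sum>u\<in>{1..<Suc t}. mu u)"

lemma cut_0[simp]: "cut mu 0 = 0" by (simp add: cut_def)
lemma cut_Suc: "cut mu (Suc t) = cut mu t + mu (Suc t)" by (simp add: cut_def)
lemma cut_mono: "t \<le> t' \<Longrightarrow> cut mu t \<le> cut mu t'"
  unfolding cut_def by (rule sum_mono2) auto

lemma block_cut: "1 \<le> j \<Longrightarrow> block mu j l = take (mu j) (drop (cut mu (j - 1)) l)"
  by (cases j) (auto simp: block_def cut_def)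

lemma take_cut_Suc: "take (cut mu (Suc t)) l = take (cut mu t) l @ block mu (Suc t) l"
  by (simp add: block_cut cut_Suc take_add)

lemma mset_block: "mset (block mu (Suc t) l) = mset (take (cut mu (Suc t)) l) - mset (take (cut mu t) l)"
  by (simp add: take_cut_Suc)

lemma filter_eq_count: "length (filter (\<lambda>x. x = i) xs) = count (mset xs) i"
  by (induction xs) auto

lemma block_sw_noncut:
  assumes "\<forall>t. cut mu t \<noteq> j" "1 \<le> j" "j < length l" "1 \<le> t"
  shows "mset (block mu t (sw j l)) = mset (block mu t l)"
proof (cases t)
  case 0
  then show ?thesis using assms by simp
next
  case (Suc t')
  then show ?thesis using assms by (simp add: mset_block mset_take_sw)
qed

lemma sorted_word_Suc: "sorted_word (Suc n) mu = sorted_word n mu @ replicate (mu (Suc n)) (Suc n)"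
  by (simp add: sorted_word_def)

lemma sorted_word_0[simp]: "sorted_word 0 mu = []" by (simp add: sorted_word_def)

lemma length_sorted_word: "length (sorted_word n mu) = cut mu n"
  by (induction n) (auto simp: sorted_word_Suc cut_Suc)

lemma set_sorted_word: "set (sorted_word n mu) \<subseteq> {1..n}"
  by (induction n) (auto simp: sorted_word_Suc)

lemma sorted_sorted_word: "sorted (sorted_word n mu)"
proof (induction n)
  case 0 then show ?case by simp
next
  case (Suc n)
  then show ?case using set_sorted_word[of n mu] by (auto simp: sorted_word_Suc sorted_append)
qed

lemma sorted_word_split: "t \<le> n \<Longrightarrow> \<exists>rest. sorted_word n mu = sorted_word t mu @ rest \<and> set rest \<subseteq> {Suc t..n}"
proof (induction n)
  case 0 then show ?case by simp
next
  case (Suc n)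
  show ?case
  proof (cases "t = Suc n")
    case True then show ?thesis by (intro exI[of _ "[]"]) simp
  next
    case False
    then obtain rest where "sorted_word n mu = sorted_word t mu @ rest" "set rest \<subseteq> {Suc t..n}"
      using Suc by auto
    then show ?thesis using False Suc.prems
      by (intro exI[of _ "rest @ replicate (mu (Suc n)) (Suc n)"]) (auto simp: sorted_word_Suc)
  qed
qed

lemma count_sorted_word: "count (mset (sorted_word n mu)) j = (if j \<in> {1..n} then mu j else 0)"
  by (induction n) (auto simp: sorted_word_Suc)

lemma sorted_word_eq_noncut:
  assumes s: "s = sorted_word n mu" and zero: "\<And>t. n < t \<Longrightarrow> mu t = 0"
    and j: "1 \<le> j" "j < length s" and eq: "s ! (j - 1) = s ! j"
  shows "\<forall>t. cut mu t \<noteq> j"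
proof
  fix t
  show "cut mu t \<noteq> j"
  proof
    assume c: "cut mu t = j"
    have tn: "t < n"
    proof (rule ccontr)
      assume "\<not> t < n"
      then have "cut mu t = cut mu n"
        unfolding cut_def using zero by (intro sum.mono_neutral_right) auto
      then show False using c j s length_sorted_word by simp
    qed
    obtain rest where r: "s = sorted_word t mu @ rest" "set rest \<subseteq> {Suc t..n}"
      using sorted_word_split[of t n mu] tn s by auto
    have lt: "length (sorted_word t mu) = j" using c length_sorted_word by simp
    have "s ! (j - 1) \<in> set (sorted_word t mu)" using r lt j by (simp add: nth_append)
    then have a: "s ! (j - 1) \<le> t" using set_sorted_word[of t mu] by auto
    have "s ! j \<in> set rest" using r lt j by (simp add: nth_append)
    then have b: "Suc t \<le> s ! j" using r by auto
    show False using a b eq by simp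
  qed
qed

lemma Mat_zero: "A \<in> Mat n r \<Longrightarrow> i \<notin> {1..n} \<or> j \<notin> {1..n} \<Longrightarrow> A i j = 0"
  unfolding Mat_def by blast

lemma co_zero: "A \<in> Mat n r \<Longrightarrow> t \<notin> {1..n} \<Longrightarrow> co n A t = 0"
  unfolding co_def using Mat_zero by (auto intro!: sum.neutral)

lemma cut_co: "A \<in> Mat n r \<Longrightarrow> cut (co n A) n = r"
proof -
  assume A: "A \<in> Mat n r"
  have "cut (co n A) n = (\<Sum>u\<in>{1..n}. \<Sum>i\<in>{1..n}. A i u)"
    unfolding cut_def co_def by (simp add: atLeastLessThanSuc_atLeastAtMost)
  also have "\<dots> = (\<Sum>i\<in>{1..n}. \<Sum>u\<in>{1..n}. A i u)" by (rule sum.swap)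
  also have "\<dots> = r" using A by (simp add: Mat_def)
  finally show ?thesis .
qed

lemma sw_A_words: "A \<in> Mat n r \<Longrightarrow> sorted_word n (co n A) \<in> words n r"
  using cut_co[of A n r] length_sorted_word set_sorted_word unfolding words_def by auto

lemma mset_eq_content:
  assumes "k \<in> words n r"
  shows "mset k = mset (sorted_word n mu) \<longleftrightarrow> (\<forall>j\<in>{1..n}. content n k j = mu j)"
proof
  assume "mset k = mset (sorted_word n mu)"
  then show "\<forall>j\<in>{1..n}. content n k j = mu j"
    by (simp add: content_def filter_eq_count count_sorted_word)
next
  assume a: "\<forall>j\<in>{1..n}. content n k j = mu j"
  show "mset k = mset (sorted_word n mu)"
  proof (rule multiset_eqI)
    fix j
    show "count (mset k) j = count (mset (sorted_word n mu)) j"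
    proof (cases "j \<in> {1..n}")
      case True
      then show ?thesis using a by (simp add: content_def filter_eq_count count_sorted_word)
    next
      case False
      then have "j \<notin> set k" using assms by (auto simp: words_def)
      then show ?thesis using False by (auto simp: count_sorted_word count_mset_0_iff)
    qed
  qed
qed

lemma yA_hsetup:
  assumes A: "A \<in> Mat n r"
  shows "hsetup n r (sorted_word n (co n A)) (yA n r A)"
proof
  let ?s = "sorted_word n (co n A)" and ?mu = "co n A"
  show "?s \<in> words n r" using sw_A_words[OF A] .
  show "sorted ?s" by (rule sorted_sorted_word)
  show "supp n r (yA n r A)" by (simp add: supp_def yA_def)
  fix j assume j: "1 \<le> j" "j < r" "?s ! (j - 1) = ?s ! j"
  have ls: "length ?s = r" using sw_A_words[OF A] by (simp add: words_length)
  have nc: "\<forall>t. cut ?mu t \<noteq> j"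
    using sorted_word_eq_noncut[of ?s n ?mu j] j ls co_zero[OF A] by auto
  show "rv j (yA n r A) = (\<lambda>_. 0)"
  proof
    fix l
    show "rv j (yA n r A) l = 0"
    proof (cases "1 \<le> j \<and> j < length l \<and> l ! j < l ! (j - 1)")
      case True
      have w: "sw j l \<in> words n r \<longleftrightarrow> l \<in> words n r" using sw_words j by blast
      have b: "\<And>t. 1 \<le> t \<Longrightarrow> mset (block ?mu t (sw j l)) = mset (block ?mu t l)"
        using block_sw_noncut[OF nc] True by blast
      have "yA n r A (sw j l) = yA n r A l"
        unfolding yA_def using w b by (simp add: filter_eq_count)
      then show ?thesis using True by (simp add: rv_def)
    next
      case False
      then show ?thesis by (auto simp: rv_def)
    qed
  qed
qed

lemma eA_char:
  assumes A: "A \<in> Mat n r"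
  shows "eA n r A = hsetup.Mc n r (sorted_word n (co n A)) (yA n r A)"
proof -
  let ?s = "sorted_word n (co n A)" and ?y = "yA n r A"
  interpret h: hsetup n r ?s ?y by (rule yA_hsetup[OF A])
  let ?P = "\<lambda>M. is_H_endo n r M \<and>
      (\<forall>l. M l (sorted_word n (co n A)) = yA n r A l) \<and>
      (\<forall>k\<in>words n r. (\<exists>j\<in>{1..n}. content n k j \<noteq> co n A j) \<longrightarrow> (\<forall>l. M l k = 0))"
  have P: "?P h.Mc"
  proof (intro conjI ballI allI impI)
    show "is_H_endo n r h.Mc" by (rule h.Mc_H_endo)
  next
    fix l show "h.Mc l ?s = ?y l"
      using h.s_words col_sorted[of ?s ?s ?y] h.s_sorted by (simp add: h.Mc_def)
  next
    fix k l assume k: "k \<in> words n r" and c: "\<exists>j\<in>{1..n}. content n k j \<noteq> co n A j"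
    then have "mset k \<noteq> mset ?s" using mset_eq_content[OF k] by blast
    then show "h.Mc l k = 0" by (simp add: h.Mc_def col_other)
  qed
  have U: "M = h.Mc" if PM: "?P M" for M
  proof (intro ext)
    fix l k
    show "M l k = h.Mc l k"
    proof (cases "k \<in> words n r")
      case False
      then show ?thesis using PM unfolding is_H_endo_def h.Mc_def by auto
    next
      case k: True
      show ?thesis
      proof (cases "mset k = mset ?s")
        case False
        then have "\<exists>j\<in>{1..n}. content n k j \<noteq> co n A j" using mset_eq_content[OF k] by blast
        then show ?thesis using PM k False by (simp add: h.Mc_def col_other)
      next
        case True
        have "(\<lambda>l. M l k) = h.cl k"
        proof (rule h.col_unique[where c = "\<lambda>k l. M l k", OF _ _ k True])
          fix k' j assume "k' \<in> words n r" "mset k' = mset ?s" "1 \<le> j" "j < r" "k' ! (j - 1) < k' ! j"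
          then show "(\<lambda>l. M l (sw j k')) = rv j (\<lambda>l. M l k')"
            using H_endo_asc[of n r M k' j] PM by simp
        next
          show "(\<lambda>l. M l ?s) = ?y" using PM by auto
        qed
        then show ?thesis using k by (simp add: h.Mc_def fun_eq_iff)
      qed
    qed
  qed
  show ?thesis unfolding eA_def by (rule the_equality[of ?P, OF P U]) 
qed


definition rhov :: "nat \<Rightarrow> nat \<Rightarrow> gen \<Rightarrow> vec \<Rightarrow> vec" where
  "rhov n r g z = (\<lambda>l. \<Sum>k\<in>words n r. rho g l k * z k)"

lemma rhov_supp: "g \<in> gens n \<Longrightarrow> supp n r (rhov n r g z)"
  unfolding supp_def rhov_def rho_actv using actv_supp unfolding supp_def
  by (auto intro!: sum.neutral)

lemma rho_rv:
  assumes g: "g \<in> gens n" and z: "supp n r z" and j: "1 \<le> j" "j < r"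
  shows "rhov n r g (rv j z) = rv j (rhov n r g z)"
proof
  fix l
  have "rhov n r g (rv j z) l = (\<Sum>k\<in>words n r. actv g k l * (\<Sum>m\<in>words n r. Pi j k m * z m))"
    unfolding rhov_def rho_actv using Pi_sum[OF z j] by simp
  also have "\<dots> = (\<Sum>k\<in>words n r. \<Sum>m\<in>words n r. z m * (actv g k l * Pi j k m))"
    by (simp add: sum_distrib_left mult.commute mult.left_commute)
  also have "\<dots> = (\<Sum>m\<in>words n r. z m * (\<Sum>k\<in>words n r. actv g k l * Pi j k m))"
    by (subst sum.swap) (simp add: sum_distrib_left)
  also have "\<dots> = (\<Sum>m\<in>words n r. z m * rv j (actv g m) l)"
  proof (rule sum.cong[OF refl])
    fix m assume m: "m \<in> words n r"
    have lm: "length m = r" using m by (simp add: words_length)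
    have "(\<Sum>k\<in>words n r. actv g k l * Pi j k m) =
      (if m ! (j - 1) < m ! j then actv g (sw j m) l else if m ! (j - 1) = m ! j then 0 else - actv g m l)"
      using Pi_col_sum[of m n r j "\<lambda>k. actv g k l"] m j by simp
    also have "\<dots> = rv j (actv g m) l" using actv_comm[of j m g] j lm by (simp add: piv_def)
    finally show "z m * (\<Sum>k\<in>words n r. actv g k l * Pi j k m) = z m * rv j (actv g m) l" by simp
  qed
  also have "\<dots> = rv j (\<lambda>l. \<Sum>m\<in>words n r. z m * actv g m l) l"
    by (simp add: rv_sum rv_scale)
  also have "\<dots> = rv j (rhov n r g z) l"
    unfolding rhov_def rho_actv by (simp add: mult.commute)
  finally show "rhov n r g (rv j z) l = rv j (rhov n r g z) l" .
qed

lemma rhov_zero[simp]: "rhov n r g (\<lambda>_. 0) = (\<lambda>_. 0)" by (simp add: rhov_def)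

lemma Mat_le: "A \<in> Mat n r \<Longrightarrow> A i j \<le> r"
proof -
  assume A: "A \<in> Mat n r"
  show ?thesis
  proof (cases "i \<in> {1..n} \<and> j \<in> {1..n}")
    case True
    have "A i j \<le> (\<Sum>j'\<in>{1..n}. A i j')" using True by (intro member_le_sum) auto
    also have "\<dots> \<le> (\<Sum>i'\<in>{1..n}. \<Sum>j'\<in>{1..n}. A i' j')" using True by (intro member_le_sum) auto
    finally show ?thesis using A by (simp add: Mat_def)
  next
    case False then show ?thesis using Mat_zero[OF A] by auto
  qed
qed

lemma finite_Mat[simp]: "finite (Mat n r)"
proof -
  let ?S = "{f :: nat \<times> nat \<Rightarrow> nat. \<forall>x. (x \<in> {1..n} \<times> {1..n} \<longrightarrow> f x \<in> {0..r}) \<and> (x \<notin> {1..n} \<times> {1..n} \<longrightarrow> f x = 0)}"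
  have "finite ?S" by (rule finite_set_of_finite_funs) auto
  moreover have "Mat n r \<subseteq> curry ` ?S"
  proof
    fix A assume A: "A \<in> Mat n r"
    have "case_prod A \<in> ?S" using Mat_le[OF A] Mat_zero[OF A] by auto
    moreover have "A = curry (case_prod A)" by simp
    ultimately show "A \<in> curry ` ?S" by blast
  qed
  ultimately show ?thesis by (rule finite_surj)
qed

definition cls :: "nat \<Rightarrow> (nat \<Rightarrow> nat) \<Rightarrow> nat list \<Rightarrow> nat \<Rightarrow> nat \<Rightarrow> nat" where
  "cls n mu l = (\<lambda>i j. if i \<in> {1..n} \<and> j \<in> {1..n} then count (mset (block mu j l)) i else 0)"

lemma yA_cls: "A \<in> Mat n r \<Longrightarrow> yA n r A l = (if l \<in> words n r \<and> cls n (co n A) l = A then 1 else 0)"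
proof -
  assume A: "A \<in> Mat n r"
  have "(cls n (co n A) l = A) \<longleftrightarrow> (\<forall>i\<in>{1..n}. \<forall>j\<in>{1..n}. count (mset (block (co n A) j l)) i = A i j)"
  proof
    assume e: "cls n (co n A) l = A"
    show "\<forall>i\<in>{1..n}. \<forall>j\<in>{1..n}. count (mset (block (co n A) j l)) i = A i j"
    proof (intro ballI)
      fix i j assume ij: "i \<in> {1..n}" "j \<in> {1..n}"
      have "cls n (co n A) l i j = A i j" using e by simp
      then show "count (mset (block (co n A) j l)) i = A i j" using ij unfolding cls_def by simp
    qed
  next
    assume a: "\<forall>i\<in>{1..n}. \<forall>j\<in>{1..n}. count (mset (block (co n A) j l)) i = A i j"
    show "cls n (co n A) l = A"
    proof (intro ext)
      fix i j
      show "cls n (co n A) l i j = A i j"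
        using a Mat_zero[OF A, of i j] unfolding cls_def by auto
    qed
  qed
  then show ?thesis unfolding yA_def by (simp add: filter_eq_count)
qed

lemma sum_count_set: "set xs \<subseteq> S \<Longrightarrow> finite S \<Longrightarrow> (\<Sum>i\<in>S. count (mset xs) i) = length xs"
proof (induction xs)
  case Nil then show ?case by simp
next
  case (Cons a xs)
  then have "(\<Sum>i\<in>S. count (mset (a # xs)) i) = (\<Sum>i\<in>S. count (mset xs) i + (if i = a then 1 else 0))"
    by (intro sum.cong) auto
  also have "\<dots> = (\<Sum>i\<in>S. count (mset xs) i) + 1" using Cons by (simp add: sum.distrib)
  finally show ?case using Cons by simp
qed

lemma length_block: "cut mu j \<le> length l \<Longrightarrow> 1 \<le> j \<Longrightarrow> length (block mu j l) = mu j"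
  using cut_Suc[of mu "j - 1"] by (cases j) (auto simp: block_cut)

lemma set_block: "set (block mu j l) \<subseteq> set l"
  unfolding block_def by (meson in_set_dropD in_set_takeD subsetI)

lemma cls_Mat:
  assumes l: "l \<in> words n r" and cn: "cut mu n = r"
  shows "cls n mu l \<in> Mat n r" "\<And>j. j \<in> {1..n} \<Longrightarrow> co n (cls n mu l) j = mu j"
proof -
  have lw: "length l = r" "set l \<subseteq> {1..n}" using l by (auto simp: words_def)
  show co: "co n (cls n mu l) j = mu j" if j: "j \<in> {1..n}" for j
  proof -
    have "co n (cls n mu l) j = (\<Sum>i\<in>{1..n}. count (mset (block mu j l)) i)"
      unfolding co_def cls_def using j by simp
    also have "\<dots> = length (block mu j l)"
      using set_block[of mu j l] lw by (intro sum_count_set) auto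
    also have "\<dots> = mu j" using j cut_mono[of j n mu] cn lw by (intro length_block) auto
    finally show ?thesis .
  qed
  have "(\<Sum>i\<in>{1..n}. \<Sum>j\<in>{1..n}. cls n mu l i j) = (\<Sum>j\<in>{1..n}. \<Sum>i\<in>{1..n}. cls n mu l i j)"
    by (rule sum.swap)
  also have "\<dots> = (\<Sum>j\<in>{1..n}. mu j)" using co unfolding co_def by simp
  also have "\<dots> = r" using cn by (simp add: cut_def atLeastLessThanSuc_atLeastAtMost)
  finally show "cls n mu l \<in> Mat n r" unfolding Mat_def cls_def by auto
qed

definition colw :: "nat \<Rightarrow> (nat \<Rightarrow> nat \<Rightarrow> nat) \<Rightarrow> nat \<Rightarrow> nat list" where
  "colw n C j = concat (map (\<lambda>i. replicate (C i j) i) [1..<Suc n])"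

definition repw :: "nat \<Rightarrow> (nat \<Rightarrow> nat \<Rightarrow> nat) \<Rightarrow> nat list" where
  "repw n C = concat (map (colw n C) [1..<Suc n])"

lemma length_colw: "length (colw n C j) = (\<Sum>i\<in>{1..n}. C i j)"
  by (induction n) (auto simp: colw_def)

lemma count_colw: "count (mset (colw n C j)) i = (if i \<in> {1..n} then C i j else 0)"
  by (induction n) (auto simp: colw_def)

lemma set_colw: "set (colw n C j) \<subseteq> {1..n}"
  by (induction n) (auto simp: colw_def)

lemma concat_split: "1 \<le> j \<Longrightarrow> j \<le> n \<Longrightarrow>
  concat (map f [1..<Suc n]) = concat (map f [1..<j]) @ f j @ concat (map f [Suc j..<Suc n])"
proof -
  assume j: "1 \<le> j" "j \<le> n"
  have "[1..<Suc n] = [1..<j] @ j # [Suc j..<Suc n]"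
  proof -
    have "[1..<Suc n] = [1..<j] @ [j..<Suc n]" using upt_add_eq_append[of 1 j "Suc n - j"] j by simp
    moreover have "[j..<Suc n] = j # [Suc j..<Suc n]" using j by (simp add: upt_conv_Cons)
    ultimately show ?thesis by simp
  qed
  then show ?thesis by simp
qed

lemma length_concat_upt: "(\<And>j. 1 \<le> j \<Longrightarrow> length (f j) = mu j) \<Longrightarrow>
  length (concat (map f [1..<Suc t])) = cut mu t"
  by (induction t) (auto simp: cut_Suc)

lemma block_concat:
  assumes len: "\<And>j. 1 \<le> j \<Longrightarrow> length (f j) = mu j" and j: "1 \<le> j" "j \<le> n"
  shows "block mu j (concat (map f [1..<Suc n])) = f j"
proof -
  have l1: "length (concat (map f [1..<j])) = cut mu (j - 1)"
    using length_concat_upt[of f mu "j - 1", OF len] j by simp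
  show ?thesis using concat_split[OF j, of f] l1 len[OF j(1)] by (simp add: block_cut[OF j(1)])
qed

lemma co_len: "co n C j = (\<Sum>i\<in>{1..n}. C i j)" by (simp add: co_def)

lemma repw_block: "1 \<le> j \<Longrightarrow> j \<le> n \<Longrightarrow> block (co n C) j (repw n C) = colw n C j"
  unfolding repw_def by (rule block_concat) (auto simp: length_colw co_len)

lemma length_repw: "length (repw n C) = cut (co n C) n"
  unfolding repw_def by (rule length_concat_upt) (simp add: length_colw co_len)

lemma repw_words: "C \<in> Mat n r \<Longrightarrow> repw n C \<in> words n r"
  using length_repw[of n C] cut_co[of C n r] set_colw[of n C]
  by (auto simp: words_def repw_def)

lemma cls_repw: "C \<in> Mat n r \<Longrightarrow> cls n (co n C) (repw n C) = C"
  unfolding cls_def using repw_block count_colw Mat_zero[of C n r] by (auto simp: fun_eq_iff)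


definition noncut :: "(nat \<Rightarrow> nat) \<Rightarrow> nat \<Rightarrow> bool" where
  "noncut mu j \<longleftrightarrow> (\<forall>t. cut mu t \<noteq> j)"

lemma yA_noncut:
  assumes A: "A \<in> Mat n r" and j: "1 \<le> j" "j < r" "noncut (co n A) j"
  shows "rv j (yA n r A) = (\<lambda>_. 0)"
proof
  fix l
  let ?mu = "co n A"
  show "rv j (yA n r A) l = 0"
  proof (cases "1 \<le> j \<and> j < length l \<and> l ! j < l ! (j - 1)")
    case True
    have w: "sw j l \<in> words n r \<longleftrightarrow> l \<in> words n r" using sw_words j by blast
    have b: "\<And>t. 1 \<le> t \<Longrightarrow> mset (block ?mu t (sw j l)) = mset (block ?mu t l)"
      using block_sw_noncut j True unfolding noncut_def by blast
    have "yA n r A (sw j l) = yA n r A l"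
      unfolding yA_def using w b by (simp add: filter_eq_count)
    then show ?thesis using True by (simp add: rv_def)
  next
    case False
    then show ?thesis by (auto simp: rv_def)
  qed
qed

lemma cls_sw_noncut:
  assumes "noncut mu j" "1 \<le> j" "j < length l"
  shows "cls n mu (sw j l) = cls n mu l"
  unfolding cls_def using block_sw_noncut[of mu j l] assms unfolding noncut_def
  by (auto simp: fun_eq_iff)

definition bs :: "nat \<Rightarrow> (nat \<Rightarrow> nat) \<Rightarrow> nat list \<Rightarrow> bool" where
  "bs r mu l \<longleftrightarrow> (\<forall>j. 1 \<le> j \<longrightarrow> j < r \<longrightarrow> noncut mu j \<longrightarrow> l ! (j - 1) \<le> l ! j)"

lemma bs_exists:
  assumes z: "\<And>j l. 1 \<le> j \<Longrightarrow> j < r \<Longrightarrow> noncut mu j \<Longrightarrow> l \<in> words n r \<Longrightarrow> l ! j < l ! (j - 1) \<Longrightarrow>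
        z (sw j l) = z l"
  shows "l \<in> words n r \<Longrightarrow> \<exists>l'. l' \<in> words n r \<and> bs r mu l' \<and> cls n mu l' = cls n mu l \<and> z l' = z l"
proof (induction "ninv l" arbitrary: l rule: less_induct)
  case less
  show ?case
  proof (cases "bs r mu l")
    case True then show ?thesis using less.prems by blast
  next
    case False
    then obtain j where j: "1 \<le> j" "j < r" "noncut mu j" "l ! j < l ! (j - 1)"
      unfolding bs_def by (auto simp: not_le)
    have lr: "length l = r" using less.prems by (simp add: words_length)
    let ?l1 = "sw j l"
    have w1: "?l1 \<in> words n r" using sw_words j less.prems by blast
    have n1: "ninv ?l1 < ninv l" using ninv_sw_desc[of j l] j lr by simp
    have c1: "cls n mu ?l1 = cls n mu l" using cls_sw_noncut j lr by simp
    have z1: "z ?l1 = z l" using z j less.prems by blast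
    show ?thesis using less.hyps[OF n1 w1] c1 z1 by auto
  qed
qed

lemma block_sorted_bs:
  assumes b: "bs r mu l" and lr: "length l = r" and cn: "cut mu n = r" and t: "1 \<le> t" "t \<le> n"
  shows "sorted (block mu t l)"
  unfolding sorted_iff_nth_Suc
proof (intro allI impI)
  fix p assume p: "Suc p < length (block mu t l)"
  obtain t' where t': "t = Suc t'" using t by (cases t) auto
  let ?c = "cut mu t'"
  have bt: "block mu t l = take (mu t) (drop ?c l)" using block_cut[OF t(1)] t' by simp
  have ct: "cut mu t = ?c + mu t" using cut_Suc[of mu t'] t' by simp
  have ctr: "cut mu t \<le> r" using cut_mono[of t n mu] t cn by simp
  have pm: "Suc p < mu t" using p bt by simp
  have cl: "?c \<le> length l" using p bt by auto
  have nth1: "block mu t l ! p = l ! (?c + p)" "block mu t l ! Suc p = l ! (?c + Suc p)"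
    using p bt cl by simp_all
  let ?j = "?c + Suc p"
  have nc: "noncut mu ?j" unfolding noncut_def
  proof
    fix t''
    show "cut mu t'' \<noteq> ?j"
    proof (cases "t'' \<le> t'")
      case True then show ?thesis using cut_mono[OF True, of mu] by simp
    next
      case False then have "t \<le> t''" using t' by simp
      then show ?thesis using cut_mono[of t t'' mu] ct pm by simp
    qed
  qed
  have j1: "1 \<le> ?j" by simp
  have j2: "?j < r" using ct ctr pm by simp
  have "l ! (?j - 1) \<le> l ! ?j" using b j1 j2 nc unfolding bs_def by blast
  then show "block mu t l ! p \<le> block mu t l ! Suc p" using nth1 by simp
qed

lemma bs_unique:
  assumes l: "l \<in> words n r" and l': "l' \<in> words n r" and b: "bs r mu l" "bs r mu l'"
    and c: "cls n mu l = cls n mu l'" and cn: "cut mu n = r"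
  shows "l = l'"
proof -
  have lw: "length l = r" "set l \<subseteq> {1..n}" "length l' = r" "set l' \<subseteq> {1..n}"
    using l l' by (auto simp: words_def)
  have bm: "mset (block mu t l) = mset (block mu t l')" if t: "1 \<le> t" "t \<le> n" for t
  proof (rule multiset_eqI)
    fix i
    show "count (mset (block mu t l)) i = count (mset (block mu t l')) i"
    proof (cases "i \<in> {1..n}")
      case True
      have "cls n mu l i t = cls n mu l' i t" using c by simp
      then show ?thesis using True t unfolding cls_def by simp
    next
      case False
      then have "i \<notin> set (block mu t l)" "i \<notin> set (block mu t l')"
        using set_block[of mu t l] set_block[of mu t l'] lw by auto
      then have "count (mset (block mu t l)) i = 0" "count (mset (block mu t l')) i = 0"
        by (simp_all add: count_mset_0_iff)
      then show ?thesis by (simp del: count_mset_0_iff)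
    qed
  qed
  have beq: "block mu t l = block mu t l'" if t: "1 \<le> t" "t \<le> n" for t
    using sorted_mset_eq[OF block_sorted_bs[OF b(1) lw(1) cn t] block_sorted_bs[OF b(2) lw(3) cn t] bm[OF t]] .
  have "t \<le> n \<Longrightarrow> take (cut mu t) l = take (cut mu t) l'" for t
  proof (induction t)
    case 0 then show ?case by simp
  next
    case (Suc t)
    then show ?case using beq[of "Suc t"] by (simp add: take_cut_Suc)
  qed
  then have "take r l = take r l'" using cn by (metis order_refl)
  then show ?thesis using lw by simp
qed

lemma class_const:
  assumes z: "\<And>j l. 1 \<le> j \<Longrightarrow> j < r \<Longrightarrow> noncut mu j \<Longrightarrow> l \<in> words n r \<Longrightarrow> l ! j < l ! (j - 1) \<Longrightarrow>
        z (sw j l) = z l"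
    and cn: "cut mu n = r"
    and l: "l \<in> words n r" and l': "l' \<in> words n r" and c: "cls n mu l = cls n mu l'"
  shows "z l = z l'"
proof -
  obtain m where m: "m \<in> words n r" "bs r mu m" "cls n mu m = cls n mu l" "z m = z l"
    using bs_exists[OF z l] by blast
  obtain m' where m': "m' \<in> words n r" "bs r mu m'" "cls n mu m' = cls n mu l'" "z m' = z l'"
    using bs_exists[OF z l'] by blast
  have "m = m'" using bs_unique[OF m(1) m'(1) m(2) m'(2) _ cn] m(3) m'(3) c by simp
  then show ?thesis using m m' by simp
qed


abbreviation sA :: "nat \<Rightarrow> (nat \<Rightarrow> nat \<Rightarrow> nat) \<Rightarrow> nat list" where
  "sA n A \<equiv> sorted_word n (co n A)"

lemma eA_col: "A \<in> Mat n r \<Longrightarrow> eA n r A l m = (if m \<in> words n r then col (sA n A) (yA n r A) m l else 0)"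
proof -
  assume A: "A \<in> Mat n r"
  interpret h: hsetup n r "sA n A" "yA n r A" by (rule yA_hsetup[OF A])
  show ?thesis using eA_char[OF A] by (simp add: h.Mc_def)
qed

lemma eA_H: "A \<in> Mat n r \<Longrightarrow> is_H_endo n r (eA n r A)"
proof -
  assume A: "A \<in> Mat n r"
  interpret h: hsetup n r "sA n A" "yA n r A" by (rule yA_hsetup[OF A])
  show ?thesis using eA_char[OF A] h.Mc_H_endo by simp
qed

lemma eA_sA: "A \<in> Mat n r \<Longrightarrow> eA n r A l (sA n A) = yA n r A l"
  using eA_col[of A n r] sw_A_words[of A n r] col_sorted[of "sA n A" "sA n A"] sorted_sorted_word by simp

lemma co_eq: "A \<in> Mat n r \<Longrightarrow> C \<in> Mat n r \<Longrightarrow> (\<forall>j\<in>{1..n}. co n A j = co n C j) \<Longrightarrow> co n A = co n C"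
  using co_zero[of A n r] co_zero[of C n r] by (auto simp: fun_eq_iff)

lemma mset_sA_eq: "A \<in> Mat n r \<Longrightarrow> C \<in> Mat n r \<Longrightarrow> mset (sA n A) = mset (sA n C) \<Longrightarrow> co n A = co n C"
proof -
  assume A: "A \<in> Mat n r" and C: "C \<in> Mat n r" and m: "mset (sA n A) = mset (sA n C)"
  have "\<forall>j\<in>{1..n}. co n A j = co n C j"
  proof
    fix j assume j: "j \<in> {1..n}"
    have "count (mset (sA n A)) j = count (mset (sA n C)) j" using m by simp
    then show "co n A j = co n C j" using j by (simp add: count_sorted_word)
  qed
  then show ?thesis using co_eq[OF A C] by simp
qed

lemma eA_other_weight: "A \<in> Mat n r \<Longrightarrow> m \<in> words n r \<Longrightarrow> mset m \<noteq> mset (sA n A) \<Longrightarrow> eA n r A l m = 0"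
  by (simp add: eA_col col_other)

lemma eA_at_rep:
  assumes C: "C \<in> Mat n r" and C0: "C0 \<in> Mat n r"
  shows "eA n r C (repw n C0) (sA n C0) = (if C = C0 then 1 else 0)"
proof (cases "co n C = co n C0")
  case True
  have "eA n r C (repw n C0) (sA n C0) = yA n r C (repw n C0)" using eA_sA[OF C] True by simp
  also have "\<dots> = (if C = C0 then 1 else 0)"
    using yA_cls[OF C] repw_words[OF C0] cls_repw[OF C0] True by auto
  finally show ?thesis .
next
  case False
  then have "mset (sA n C0) \<noteq> mset (sA n C)" using mset_sA_eq[OF C0 C] by auto
  then have "eA n r C (repw n C0) (sA n C0) = 0" using eA_other_weight[OF C sw_A_words[OF C0]] by simp
  moreover have "C \<noteq> C0" using False by auto
  ultimately show ?thesis by simp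
qed

lemma sum_eval_rep:
  assumes C0: "C0 \<in> Mat n r"
  shows "(\<Sum>C\<in>Mat n r. c C * eA n r C (repw n C0) (sA n C0)) = c C0"
proof -
  have "(\<Sum>C\<in>Mat n r. c C * eA n r C (repw n C0) (sA n C0)) = (\<Sum>C\<in>Mat n r. if C = C0 then c C else 0)"
    by (rule sum.cong) (auto simp: eA_at_rep C0)
  also have "\<dots> = c C0" using C0 by (simp add: sum.delta')
  finally show ?thesis .
qed

lemma coord_char:
  assumes z: "\<And>C. C \<notin> Mat n r \<Longrightarrow> c C = 0"
    and M: "M = (\<lambda>l m. \<Sum>C\<in>Mat n r. c C * eA n r C l m)"
  shows "coord n r M = c"
  unfolding coord_def
proof (rule the_equality)
  show "(\<forall>A. A \<notin> Mat n r \<longrightarrow> c A = 0) \<and> M = (\<lambda>l m. \<Sum>A\<in>Mat n r. c A * eA n r A l m)"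
    using z M by blast
next
  fix c' assume a: "(\<forall>A. A \<notin> Mat n r \<longrightarrow> c' A = 0) \<and> M = (\<lambda>l m. \<Sum>A\<in>Mat n r. c' A * eA n r A l m)"
  show "c' = c"
  proof
    fix C0
    show "c' C0 = c C0"
    proof (cases "C0 \<in> Mat n r")
      case True
      have "M (repw n C0) (sA n C0) = c' C0" using a sum_eval_rep[OF True, of c'] by simp
      moreover have "M (repw n C0) (sA n C0) = c C0" using M sum_eval_rep[OF True, of c] by simp
      ultimately show ?thesis by simp
    next
      case False then show ?thesis using a z by simp
    qed
  qed
qed

lemma H_col_supp: "is_H_endo n r M \<Longrightarrow> supp n r (\<lambda>l. M l k)"
  unfolding is_H_endo_def supp_def by auto

lemma rho_eA_expansion:
  assumes A: "A \<in> Mat n r" and g: "g \<in> gens n"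
  shows "(\<lambda>l m. \<Sum>k\<in>words n r. rho g l k * eA n r A k m) =
    (\<lambda>l m. \<Sum>C\<in>Mat n r. (if C \<in> Mat n r \<and> co n C = co n A then rhov n r g (yA n r A) (repw n C) else 0) * eA n r C l m)"
    (is "?L = (\<lambda>l m. \<Sum>C\<in>Mat n r. ?cg C * eA n r C l m)")
proof -
  let ?z = "rhov n r g (yA n r A)" and ?s = "sA n A" and ?mu = "co n A"
  have zsupp: "supp n r ?z" using rhov_supp[OF g] .
  have ysupp: "supp n r (yA n r A)" by (simp add: supp_def yA_def)
  have znc: "rv j ?z = (\<lambda>_. 0)" if j: "1 \<le> j" "j < r" "noncut ?mu j" for j
    using rho_rv[OF g ysupp j(1,2)] yA_noncut[OF A j] by simp
  have zcc: "?z l = ?z l'" if l: "l \<in> words n r" "l' \<in> words n r" "cls n ?mu l = cls n ?mu l'" for l l'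
  proof (rule class_const[of r ?mu n ?z, OF _ cut_co[OF A] l])
    fix j l assume j: "1 \<le> j" "j < r" "noncut ?mu j" "l \<in> words n r" "l ! j < l ! (j - 1)"
    have "rv j ?z l = 0" using znc[OF j(1-3)] by simp
    moreover have "j < length l" using j by (simp add: words_length)
    ultimately show "?z (sw j l) = ?z l" using j by (simp add: rv_def)
  qed
  have hs: "hsetup n r ?s ?z"
  proof
    show "?s \<in> words n r" using sw_A_words[OF A] .
    show "sorted ?s" by (rule sorted_sorted_word)
    show "supp n r ?z" by (rule zsupp)
    fix j assume j: "1 \<le> j" "j < r" "?s ! (j - 1) = ?s ! j"
    have ls: "length ?s = r" using sw_A_words[OF A] by (simp add: words_length)
    have "noncut ?mu j" unfolding noncut_def
      using sorted_word_eq_noncut[of ?s n ?mu j] j ls co_zero[OF A] by auto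
    then show "rv j ?z = (\<lambda>_. 0)" using znc j by simp
  qed
  interpret h: hsetup n r ?s ?z by (rule hs)
  have eAH: "is_H_endo n r (eA n r A)" by (rule eA_H[OF A])
  show ?thesis
  proof (intro ext)
    fix l m
    show "?L l m = (\<Sum>C\<in>Mat n r. ?cg C * eA n r C l m)"
    proof (cases "m \<in> words n r")
      case False
      then show ?thesis using eA_col[of _ n r] A by (auto intro!: sum.neutral)
    next
      case m: True
      show ?thesis
      proof (cases "mset m = mset ?s")
        case False
        have "eA n r A k m = 0" for k using eA_other_weight[OF A m False] .
        moreover have "?cg C * eA n r C l m = 0" if C: "C \<in> Mat n r" for C
          using eA_other_weight[OF C m] False by auto
        ultimately show ?thesis by (auto intro!: sum.neutral)
      next
        case True
        let ?c1 = "\<lambda>m l. \<Sum>k\<in>words n r. rho g l k * eA n r A k m"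
        let ?c2 = "\<lambda>m l. \<Sum>C\<in>Mat n r. ?cg C * eA n r C l m"
        have c1: "?c1 m = h.cl m"
        proof (rule h.col_unique[OF _ _ m True])
          fix m' j assume a: "m' \<in> words n r" "mset m' = mset ?s" "1 \<le> j" "j < r" "m' ! (j - 1) < m' ! j"
          have "(\<lambda>k. eA n r A k (sw j m')) = rv j (\<lambda>k. eA n r A k m')"
            using H_endo_asc[OF eAH a(1,3,4,5)] .
          then have e: "\<And>k. eA n r A k (sw j m') = rv j (\<lambda>k. eA n r A k m') k" by (simp add: fun_eq_iff)
          have "?c1 (sw j m') = rhov n r g (rv j (\<lambda>k. eA n r A k m'))"
            by (simp add: rhov_def e)
          also have "\<dots> = rv j (rhov n r g (\<lambda>k. eA n r A k m'))"
            using rho_rv[OF g H_col_supp[OF eAH] a(3,4)] .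
          finally show "?c1 (sw j m') = rv j (?c1 m')" by (simp add: rhov_def)
        next
          show "?c1 ?s = ?z" using eA_sA[OF A] by (simp add: rhov_def)
        qed
        have c2: "?c2 m = h.cl m"
        proof (rule h.col_unique[OF _ _ m True])
          fix m' j assume a: "m' \<in> words n r" "mset m' = mset ?s" "1 \<le> j" "j < r" "m' ! (j - 1) < m' ! j"
          have "\<And>C. C \<in> Mat n r \<Longrightarrow> (\<lambda>l. eA n r C l (sw j m')) = rv j (\<lambda>l. eA n r C l m')"
            using H_endo_asc[OF eA_H a(1,3,4,5)] by blast
          then have "?c2 (sw j m') = (\<lambda>l. \<Sum>C\<in>Mat n r. ?cg C * rv j (\<lambda>l. eA n r C l m') l)"
            by (intro ext sum.cong refl) (metis)
          also have "\<dots> = rv j (?c2 m')" by (simp add: rv_sum rv_scale)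
          finally show "?c2 (sw j m') = rv j (?c2 m')" .
        next
          show "?c2 ?s = ?z"
          proof
            fix l
            have e1: "?c2 ?s l = (\<Sum>C\<in>Mat n r. if co n C = co n A then ?z (repw n C) * yA n r C l else 0)"
            proof (intro sum.cong refl)
              fix C assume C: "C \<in> Mat n r"
              show "?cg C * eA n r C l ?s = (if co n C = co n A then ?z (repw n C) * yA n r C l else 0)"
              proof (cases "co n C = co n A")
                case True
                then have "eA n r C l ?s = yA n r C l" using eA_sA[OF C, of l] by simp
                then show ?thesis using True C by simp
              next
                case False then show ?thesis by simp
              qed
            qed
            show "?c2 ?s l = ?z l"
            proof (cases "l \<in> words n r")
              case False
              then have "?c2 ?s l = 0" unfolding e1 by (auto simp: yA_def intro!: sum.neutral)
              then show ?thesis using zsupp False by (simp add: supp_def)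
            next
              case lw: True
              let ?C0 = "cls n ?mu l"
              have C0: "?C0 \<in> Mat n r" using cls_Mat(1)[OF lw cut_co[OF A]] .
              have coC0: "co n ?C0 = co n A"
                using co_eq[OF C0 A] cls_Mat(2)[OF lw cut_co[OF A]] by simp
              have "?c2 ?s l = (\<Sum>C\<in>Mat n r. if C = ?C0 then ?z (repw n C) else 0)"
                unfolding e1
              proof (intro sum.cong refl)
                fix C assume C: "C \<in> Mat n r"
                show "(if co n C = co n A then ?z (repw n C) * yA n r C l else 0) =
                      (if C = ?C0 then ?z (repw n C) else 0)"
                  using yA_cls[OF C, of l] lw coC0 by auto
              qed
              also have "\<dots> = ?z (repw n ?C0)" using C0 by (simp add: sum.delta')
              also have "\<dots> = ?z l"
              proof (rule zcc[OF repw_words[OF C0] lw])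
                show "cls n ?mu (repw n ?C0) = cls n ?mu l" using cls_repw[OF C0] coC0 by simp
              qed
              finally show ?thesis .
            qed
          qed
        qed
        have "?c1 m = ?c2 m" using c1 c2 by (rule trans[OF _ sym])
        then have "?c1 m l = ?c2 m l" by (rule fun_cong)
        then show ?thesis by simp
      qed
    qed
  qed
qed

lemma S_act_char:
  assumes A: "A \<in> Mat n r" and g: "g \<in> gens n"
  shows "S_act n r g B A = (if B \<in> Mat n r \<and> co n B = co n A then rhov n r g (yA n r A) (repw n B) else 0)"
proof -
  have "coord n r (\<lambda>l m. \<Sum>k\<in>words n r. rho g l k * eA n r A k m) =
    (\<lambda>C. if C \<in> Mat n r \<and> co n C = co n A then rhov n r g (yA n r A) (repw n C) else 0)"
  proof (rule coord_char)
    fix C :: "nat \<Rightarrow> nat \<Rightarrow> nat" assume "C \<notin> Mat n r"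
    then show "(if C \<in> Mat n r \<and> co n C = co n A then rhov n r g (yA n r A) (repw n C) else 0) = 0" by simp
  next
    show "(\<lambda>l m. \<Sum>k\<in>words n r. rho g l k * eA n r A k m) =
      (\<lambda>l m. \<Sum>C\<in>Mat n r. (if C \<in> Mat n r \<and> co n C = co n A then rhov n r g (yA n r A) (repw n C) else 0) * eA n r C l m)"
      by (rule rho_eA_expansion[OF A g])
  qed
  then show ?thesis unfolding S_act_def by (rule fun_cong)
qed


locale lsetup =
  fixes n r :: nat and lam :: "nat list"
  assumes lamB: "lam \<in> Lambda_bullet n r"
begin

definition mu :: "nat \<Rightarrow> nat" where "mu j = (if j \<in> {1..n} then lam ! (j - 1) else 0)"
definition KK :: "nat set" where "KK = comp_set (strong lam)"
definition pp :: nat where "pp = length (takeWhile (\<lambda>x. x \<noteq> 0) lam)"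

lemma len_lam: "length lam = n" and sum_lam: "sum_list lam = r"
  using lamB by (auto simp: Lambda_bullet_def)

lemma zero_after: "i < j \<Longrightarrow> j < n \<Longrightarrow> lam ! i = 0 \<Longrightarrow> lam ! j = 0"
  using lamB by (auto simp: Lambda_bullet_def)

lemma pp_le: "pp \<le> n" unfolding pp_def using length_takeWhile_le[of _ lam] len_lam by simp

lemma nz_before: "j < pp \<Longrightarrow> lam ! j \<noteq> 0"
proof -
  assume j: "j < pp"
  then have "takeWhile (\<lambda>x. x \<noteq> 0) lam ! j \<in> set (takeWhile (\<lambda>x. x \<noteq> 0) lam)"
    unfolding pp_def by (rule nth_mem)
  then have "takeWhile (\<lambda>x. x \<noteq> 0) lam ! j \<noteq> 0" by (blast dest: set_takeWhileD)
  then show ?thesis using takeWhile_nth[of j "\<lambda>x. x \<noteq> 0" lam] j unfolding pp_def by simp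
qed

lemma zero_from: "pp \<le> j \<Longrightarrow> j < n \<Longrightarrow> lam ! j = 0"
proof -
  assume j: "pp \<le> j" "j < n"
  have p0: "lam ! pp = 0"
  proof -
    have "dropWhile (\<lambda>x. x \<noteq> 0) lam \<noteq> []" using j len_lam pp_def
      by (metis dropWhile_eq_drop drop_eq_Nil leD le_less_trans)
    then have "hd (dropWhile (\<lambda>x. x \<noteq> 0) lam) = 0" using hd_dropWhile by blast
    moreover have "hd (dropWhile (\<lambda>x. x \<noteq> 0) lam) = lam ! pp"
      using \<open>dropWhile (\<lambda>x. x \<noteq> 0) lam \<noteq> []\<close> unfolding pp_def
      by (simp add: dropWhile_eq_drop hd_drop_conv_nth)
    ultimately show ?thesis by simp
  qed
  show ?thesis
  proof (cases "j = pp")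
    case True then show ?thesis using p0 by simp
  next
    case False then show ?thesis using zero_after[of pp j] p0 j by simp
  qed
qed

lemma strong_take: "strong lam = take pp lam"
proof -
  let ?P = "\<lambda>x::nat. x \<noteq> 0"
  have e: "strong lam = filter ?P (takeWhile ?P lam) @ filter ?P (dropWhile ?P lam)"
    unfolding strong_def by (metis filter_append takeWhile_dropWhile_id)
  have d: "filter ?P (dropWhile ?P lam) = []"
  proof -
    have "\<forall>x\<in>set (drop pp lam). x = 0"
      using zero_from len_lam by (auto simp: in_set_conv_nth)
    then show ?thesis unfolding pp_def by (simp add: dropWhile_eq_drop filter_empty_conv)
  qed
  have a: "filter ?P (takeWhile ?P lam) = takeWhile ?P lam"
    by (rule filter_True) (auto dest: set_takeWhileD)
  have "strong lam = takeWhile ?P lam" using e d a by simp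
  also have "\<dots> = take pp lam" unfolding pp_def by (metis takeWhile_eq_take)
  finally show ?thesis .
qed

lemma length_strong: "length (strong lam) = pp" using strong_take pp_le len_lam by simp

lemma cut_sum: "j \<le> n \<Longrightarrow> cut mu j = sum_list (take j lam)"
proof (induction j)
  case 0 then show ?case by simp
next
  case (Suc j)
  then have "j < length lam" using len_lam by simp
  then show ?case using Suc by (simp add: cut_Suc mu_def take_Suc_conv_app_nth)
qed

lemma cut_n: "cut mu n = r" using cut_sum[of n] len_lam sum_lam by simp

lemma mu_zero: "t \<notin> {1..n} \<Longrightarrow> mu t = 0" unfolding mu_def by auto

lemma KK_char: "KK = {cut mu j | j. 1 \<le> j \<and> j < pp}"
proof -
  have "\<And>j. j < pp \<Longrightarrow> sum_list (take j (strong lam)) = cut mu j"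
    using strong_take cut_sum pp_le by (simp add: min_def)
  then show ?thesis unfolding KK_def comp_set_def length_strong by (auto simp: length_strong) metis
qed

lemma cut_pos: "1 \<le> j \<Longrightarrow> j \<le> pp \<Longrightarrow> 0 < cut mu j"
proof -
  assume j: "1 \<le> j" "j \<le> pp"
  have "0 < mu 1" using nz_before[of 0] j pp_le by (simp add: mu_def)
  moreover have "cut mu 1 \<le> cut mu j" using j by (intro cut_mono)
  ultimately show ?thesis by (simp add: cut_def)
qed

lemma cut_less: "j < pp \<Longrightarrow> cut mu j < r"
proof -
  assume j: "j < pp"
  have "0 < mu (Suc j)" using nz_before[OF j] j pp_le by (simp add: mu_def)
  moreover have "cut mu (Suc j) \<le> cut mu n" using j pp_le by (intro cut_mono) simp
  ultimately show ?thesis using cut_n by (simp add: cut_Suc)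
qed

lemma KK_range: "c \<in> KK \<Longrightarrow> 1 \<le> c \<and> c < r"
  using KK_char cut_pos cut_less by fastforce

lemma beta_co: "B \<in> beta n r lam \<Longrightarrow> B \<in> Mat n r \<and> co n B = mu"
proof -
  assume B: "B \<in> beta n r lam"
  then have Bm: "B \<in> Mat n r" by (simp add: beta_def)
  have "co n B j = mu j" for j
    using B co_zero[OF Bm, of j] by (auto simp: beta_def mu_def)
  then show ?thesis using Bm by auto
qed

lemma beta_cbd: "B \<in> beta n r lam \<Longrightarrow> col_block_diag B" by (simp add: beta_def)

end

lemma nth_in_take: "q < c \<Longrightarrow> q < length l \<Longrightarrow> l ! q \<in> set (take c l)"
proof -
  assume a: "q < c" "q < length l"
  then have "take c l ! q = l ! q" by simp
  moreover have "q < length (take c l)" using a by simp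
  ultimately show ?thesis by (metis nth_mem)
qed

lemma nth_in_drop: "c \<le> q \<Longrightarrow> q < length l \<Longrightarrow> l ! q \<in> set (drop c l)"
proof -
  assume a: "c \<le> q" "q < length l"
  then have "drop c l ! (q - c) = l ! q" by simp
  moreover have "q - c < length (drop c l)" using a by simp
  ultimately show ?thesis by (metis nth_mem)
qed

lemma repw_split: "t \<le> n \<Longrightarrow> repw n C = concat (map (colw n C) [1..<Suc t]) @ concat (map (colw n C) [Suc t..<Suc n])"
proof -
  assume t: "t \<le> n"
  have "[1..<Suc n] = [1..<Suc t] @ [Suc t..<Suc n]" using upt_add_eq_append[of 1 "Suc t" "n - t"] t by simp
  then show ?thesis unfolding repw_def by simp
qed

lemma length_prefix_repw: "length (concat (map (colw n C) [1..<Suc t])) = cut (co n C) t"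
  by (rule length_concat_upt) (simp add: length_colw co_len)

lemma take_repw: "t \<le> n \<Longrightarrow> take (cut (co n C) t) (repw n C) = concat (map (colw n C) [1..<Suc t])"
  using repw_split[of t n C] length_prefix_repw[of n C t] by simp

lemma drop_repw: "t \<le> n \<Longrightarrow> drop (cut (co n C) t) (repw n C) = concat (map (colw n C) [Suc t..<Suc n])"
  using repw_split[of t n C] length_prefix_repw[of n C t] by simp

lemma set_colw_pos: "x \<in> set (colw n C j) \<Longrightarrow> x \<in> {1..n} \<and> 0 < C x j"
proof -
  assume x: "x \<in> set (colw n C j)"
  then have "count (mset (colw n C j)) x \<noteq> 0" by simp
  then show ?thesis by (simp add: count_colw split: if_splits)
qed

lemma sorted_colw: "sorted (colw n C j)"
proof (induction n)
  case 0 then show ?case by (simp add: colw_def)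
next
  case (Suc n)
  have "colw (Suc n) C j = colw n C j @ replicate (C (Suc n) j) (Suc n)" by (simp add: colw_def)
  moreover have "set (colw n C j) \<subseteq> {1..n}" by (rule set_colw)
  ultimately show ?case using Suc by (auto simp: sorted_append)
qed

lemma cbd_sep: "col_block_diag B \<Longrightarrow> x \<in> set (colw n B j) \<Longrightarrow> y \<in> set (colw n B j') \<Longrightarrow> j < j' \<Longrightarrow> x < y"
proof (rule ccontr)
  assume c: "col_block_diag B" and x: "x \<in> set (colw n B j)" and y: "y \<in> set (colw n B j')"
    and jj: "j < j'" and ny: "\<not> x < y"
  have "0 < B x j" "0 < B y j'" using set_colw_pos x y by auto
  moreover have "y \<le> x" using ny by simp
  ultimately show False using c jj unfolding col_block_diag_def by fastforce
qed

lemma cbd_sep_concat: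
  assumes c: "col_block_diag B" and x: "x \<in> set (concat (map (colw n B) [1..<Suc t]))"
    and y: "y \<in> set (concat (map (colw n B) [Suc t..<Suc m]))"
  shows "x < y"
proof -
  obtain j where j0: "j \<in> set [1..<Suc t]" "x \<in> set (colw n B j)" using x by auto
  then have j: "j \<in> {1..t}" "x \<in> set (colw n B j)" by auto
  obtain j' where j0': "j' \<in> set [Suc t..<Suc m]" "y \<in> set (colw n B j')" using y by auto
  then have j': "j' \<in> {Suc t..m}" "y \<in> set (colw n B j')" by auto
  show ?thesis using cbd_sep[OF c j(2) j'(2)] j j' by simp
qed

lemma sorted_repw_prefix: "col_block_diag B \<Longrightarrow> sorted (concat (map (colw n B) [1..<Suc t]))"
proof (induction t)
  case 0 then show ?case by simp
next
  case (Suc t)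
  have eq: "concat (map (colw n B) [1..<Suc (Suc t)]) = concat (map (colw n B) [1..<Suc t]) @ colw n B (Suc t)"
    by simp
  have sep: "\<forall>x\<in>set (concat (map (colw n B) [1..<Suc t])). \<forall>y\<in>set (colw n B (Suc t)). x \<le> y"
  proof (intro ballI)
    fix x y assume xx: "x \<in> set (concat (map (colw n B) [1..<Suc t]))" and yy: "y \<in> set (colw n B (Suc t))"
    have "x < y" by (rule cbd_sep_concat[where m="Suc t", OF Suc.prems xx]) (simp add: yy)
    then show "x \<le> y" by simp
  qed
  have IH: "sorted (concat (map (colw n B) [1..<Suc t]))" using Suc.IH Suc.prems .
  have sc: "sorted (colw n B (Suc t))" by (rule sorted_colw)
  show ?case unfolding eq sorted_append using IH sc sep by blast
qed

lemma sorted_repw: "col_block_diag B \<Longrightarrow> sorted (repw n B)"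
  unfolding repw_def by (rule sorted_repw_prefix)

lemma cls_prefix:
  assumes l: "l \<in> words n r" and l': "l' \<in> words n r" and c: "cls n mu l = cls n mu l'"
  shows "t \<le> n \<Longrightarrow> mset (take (cut mu t) l) = mset (take (cut mu t) l')"
proof (induction t)
  case 0 then show ?case by simp
next
  case (Suc t)
  have lw: "set l \<subseteq> {1..n}" "set l' \<subseteq> {1..n}" using l l' by (auto simp: words_def)
  have "mset (block mu (Suc t) l) = mset (block mu (Suc t) l')"
  proof (rule multiset_eqI)
    fix i
    show "count (mset (block mu (Suc t) l)) i = count (mset (block mu (Suc t) l')) i"
    proof (cases "i \<in> {1..n}")
      case True
      have "cls n mu l i (Suc t) = cls n mu l' i (Suc t)" using c by simp
      then show ?thesis using True Suc.prems unfolding cls_def by simp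
    next
      case False
      then have "i \<notin> set (block mu (Suc t) l)" "i \<notin> set (block mu (Suc t) l')"
        using set_block[of mu "Suc t" l] set_block[of mu "Suc t" l'] lw by auto
      then have "count (mset (block mu (Suc t) l)) i = 0" "count (mset (block mu (Suc t) l')) i = 0"
        by (simp_all add: count_mset_0_iff)
      then show ?thesis by (simp del: count_mset_0_iff)
    qed
  qed
  then show ?case using Suc by (simp add: take_cut_Suc)
qed

context lsetup
begin

lemma rep_sep:
  assumes B: "B \<in> beta n r lam" and t: "t \<le> n"
    and x: "x \<in> set (take (cut mu t) (repw n B))" and y: "y \<in> set (drop (cut mu t) (repw n B))"
  shows "x < y"
proof -
  have co: "co n B = mu" using beta_co[OF B] by simp
  show ?thesis using x y take_repw[OF t, of B] drop_repw[OF t, of B] co cbd_sep_concat[OF beta_cbd[OF B]]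
    by metis
qed

lemma rep_words: "B \<in> beta n r lam \<Longrightarrow> repw n B \<in> words n r"
  using beta_co repw_words by blast

lemma rep_strict:
  assumes B: "B \<in> beta n r lam" and c: "c \<in> KK"
  shows "repw n B ! (c - 1) < repw n B ! c"
proof -
  obtain j where j: "c = cut mu j" "1 \<le> j" "j < pp" using c KK_char by auto
  have cr: "1 \<le> c" "c < r" using KK_range[OF c] by auto
  have lr: "length (repw n B) = r" using rep_words[OF B] by (simp add: words_length)
  have jn: "j \<le> n" using j pp_le by simp
  have "repw n B ! (c - 1) \<in> set (take c (repw n B))" using cr lr by (intro nth_in_take) auto
  moreover have "repw n B ! c \<in> set (drop c (repw n B))" using cr lr by (intro nth_in_drop) auto
  ultimately show ?thesis using rep_sep[OF B jn] j by simp
qed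

lemma cls_rep: "B \<in> beta n r lam \<Longrightarrow> cls n mu (repw n B) = B"
  using beta_co cls_repw by metis

lemma class_strict:
  assumes A: "A \<in> beta n r lam" and k: "k \<in> words n r" and ck: "cls n mu k = A" and c: "c \<in> KK"
    and q: "q < c" "c \<le> q'" "q' < r"
  shows "k ! q < k ! q'"
proof -
  obtain j where j: "c = cut mu j" "1 \<le> j" "j < pp" using c KK_char by auto
  have jn: "j \<le> n" using j pp_le by simp
  have rw: "repw n A \<in> words n r" by (rule rep_words[OF A])
  have cl: "cls n mu k = cls n mu (repw n A)" using ck cls_rep[OF A] by simp
  have m1: "mset (take c k) = mset (take c (repw n A))" using cls_prefix[OF k rw cl jn] j by simp
  have m2: "mset k = mset (repw n A)"
    using cls_prefix[OF k rw cl order_refl] cut_n k rw by (simp add: words_length)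
  have m3: "mset (drop c k) = mset (drop c (repw n A))"
  proof -
    have "mset k = mset (take c k) + mset (drop c k)" by (metis append_take_drop_id mset_append)
    moreover have "mset (repw n A) = mset (take c (repw n A)) + mset (drop c (repw n A))"
      by (metis append_take_drop_id mset_append)
    ultimately show ?thesis using m1 m2 by simp
  qed
  have lk: "length k = r" using k by (simp add: words_length)
  have "k ! q \<in> set (take c k)" using q lk by (intro nth_in_take) auto
  then have x: "k ! q \<in> set (take c (repw n A))" using arg_cong[OF m1, of set_mset] by simp
  have "k ! q' \<in> set (drop c k)" using q lk by (intro nth_in_drop) auto
  then have y: "k ! q' \<in> set (drop c (repw n A))" using arg_cong[OF m3, of set_mset] by simp
  show ?thesis using rep_sep[OF A jn] x y j by simp
qed

end


definition inR :: "nat set \<Rightarrow> nat list \<Rightarrow> nat list \<Rightarrow> bool" where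
  "inR Ks s k \<longleftrightarrow> length k = length s \<and>
     (\<forall>c. c \<le> length s \<longrightarrow> c \<notin> Ks \<longrightarrow> mset (take c k) = mset (take c s)) \<and>
     (\<forall>p q. p < q \<longrightarrow> q < length s \<longrightarrow> (\<forall>t. p < t \<and> t \<le> q \<longrightarrow> t \<in> Ks) \<longrightarrow> k ! p \<noteq> k ! q)"

definition ph :: "nat set \<Rightarrow> nat list \<Rightarrow> nat list \<Rightarrow> complex" where
  "ph Ks s k = (if inR Ks s k then (-1) ^ ninv k else 0)"

locale rsetup =
  fixes Ks :: "nat set" and s :: "nat list"
  assumes s_sorted: "sorted s"
    and s_strict: "\<And>i. i \<in> Ks \<Longrightarrow> 1 \<le> i \<and> i < length s \<and> s ! (i - 1) < s ! i"
begin

lemma chain: "(\<forall>t. p < t \<and> t \<le> q \<longrightarrow> t \<in> Ks) \<Longrightarrow> p < q \<Longrightarrow> s ! p < s ! q"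
proof (induction q)
  case 0 then show ?case by simp
next
  case (Suc q)
  have "Suc q \<in> Ks" using Suc.prems by auto
  then have st: "s ! q < s ! Suc q" using s_strict[of "Suc q"] by simp
  show ?case
  proof (cases "p = q")
    case True then show ?thesis using st by simp
  next
    case False
    then have "s ! p < s ! q" using Suc by auto
    then show ?thesis using st by simp
  qed
qed

lemma R0: "inR Ks s s"
  unfolding inR_def using chain by (metis less_irrefl)

lemma R4: "inR Ks s k \<Longrightarrow> mset k = mset s"
proof -
  assume k: "inR Ks s k"
  have "length s \<notin> Ks" using s_strict by fastforce
  then have "mset (take (length s) k) = mset (take (length s) s)" using k unfolding inR_def by blast
  then show ?thesis using k unfolding inR_def by simp
qed

lemma R3: "inR Ks s k \<Longrightarrow> i \<in> Ks \<Longrightarrow> k ! (i - 1) \<noteq> k ! i"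
proof -
  assume k: "inR Ks s k" and i: "i \<in> Ks"
  have i1: "1 \<le> i" "i < length s" using s_strict[OF i] by auto
  have r: "\<forall>t. i - 1 < t \<and> t \<le> i \<longrightarrow> t \<in> Ks"
  proof (intro allI impI)
    fix t assume "i - 1 < t \<and> t \<le> i"
    then have "t = i" using i1 by auto
    then show "t \<in> Ks" using i by simp
  qed
  have "i - 1 < i" using i1 by simp
  then show ?thesis using k i1 r unfolding inR_def by blast
qed

lemma sorted_take_drop: "x \<in> set (take c s) \<Longrightarrow> y \<in> set (drop c s) \<Longrightarrow> x \<le> y"
  using s_sorted sorted_append[of "take c s" "drop c s"] by simp

lemma R2: "inR Ks s k \<Longrightarrow> 1 \<le> i \<Longrightarrow> i < length s \<Longrightarrow> i \<notin> Ks \<Longrightarrow> k ! (i - 1) \<le> k ! i"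
proof -
  assume k: "inR Ks s k" and i: "1 \<le> i" "i < length s" "i \<notin> Ks"
  have lk: "length k = length s" using k by (simp add: inR_def)
  have m1: "mset (take i k) = mset (take i s)" using k i unfolding inR_def by simp
  have m2: "mset k = mset s" using R4[OF k] .
  have m3: "mset (drop i k) = mset (drop i s)"
  proof -
    have "mset k = mset (take i k) + mset (drop i k)" by (metis append_take_drop_id mset_append)
    moreover have "mset s = mset (take i s) + mset (drop i s)" by (metis append_take_drop_id mset_append)
    ultimately show ?thesis using m1 m2 by simp
  qed
  have "k ! (i - 1) \<in> set (take i k)" using i lk by (intro nth_in_take) auto
  then have x: "k ! (i - 1) \<in> set (take i s)" using arg_cong[OF m1, of set_mset] by simp
  have "k ! i \<in> set (drop i k)" using i lk by (intro nth_in_drop) auto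
  then have y: "k ! i \<in> set (drop i s)" using arg_cong[OF m3, of set_mset] by simp
  show ?thesis using sorted_take_drop[OF x y] .
qed

lemma R5: "inR Ks s k \<Longrightarrow> (\<forall>c\<in>Ks. mset (take c k) = mset (take c s)) \<Longrightarrow> k = s"
proof -
  assume k: "inR Ks s k" and c: "\<forall>c\<in>Ks. mset (take c k) = mset (take c s)"
  have lk: "length k = length s" using k by (simp add: inR_def)
  have all: "mset (take c k) = mset (take c s)" if "c \<le> length s" for c
    using k c that unfolding inR_def by (cases "c \<in> Ks") auto
  show ?thesis
  proof (rule nth_equalityI)
    show "length k = length s" by (rule lk)
  next
    fix q assume q: "q < length k"
    have "mset (take (Suc q) k) = mset (take q k) + {#k ! q#}" using q by (simp add: take_Suc_conv_app_nth)
    moreover have "mset (take (Suc q) s) = mset (take q s) + {#s ! q#}" using q lk by (simp add: take_Suc_conv_app_nth)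
    ultimately show "k ! q = s ! q" using all[of q] all[of "Suc q"] q lk by simp
  qed
qed

lemma R1: assumes k: "inR Ks s k" and i: "i \<in> Ks" shows "inR Ks s (sw i k)"
proof -
  have i1: "1 \<le> i" "i < length s" using s_strict[OF i] by auto
  have lk: "length k = length s" using k by (simp add: inR_def)
  let ?tau = "\<lambda>x. if x = i - 1 then i else if x = i then i - 1 else x"
  have nth: "sw i k ! x = k ! ?tau x" if "x < length s" for x using that i1 lk by (simp add: nth_sw)
  have P1: "\<forall>c. c \<le> length s \<longrightarrow> c \<notin> Ks \<longrightarrow> mset (take c (sw i k)) = mset (take c s)"
  proof (intro allI impI)
    fix c assume c: "c \<le> length s" "c \<notin> Ks"
    then have "c \<noteq> i" using i by auto
    then have "mset (take c (sw i k)) = mset (take c k)" using i1 lk by (intro mset_take_sw) auto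
    then show "mset (take c (sw i k)) = mset (take c s)" using k c unfolding inR_def by simp
  qed
  have P2: "sw i k ! p \<noteq> sw i k ! q" if pq: "p < q" "q < length s" "\<forall>t. p < t \<and> t \<le> q \<longrightarrow> t \<in> Ks" for p q
  proof -
    let ?a = "min (?tau p) (?tau q)" and ?b = "max (?tau p) (?tau q)"
    have ab: "?a < ?b" using pq i1 by auto
    have bl: "?b < length s" using pq i1 by auto
    have run: "\<forall>t. ?a < t \<and> t \<le> ?b \<longrightarrow> t \<in> Ks"
    proof (intro allI impI)
      fix t assume t: "?a < t \<and> t \<le> ?b"
      then have "(p < t \<and> t \<le> q) \<or> t = i" using pq i1 by (auto split: if_splits)
      then show "t \<in> Ks" using pq i by auto
    qed
    have "k ! ?a \<noteq> k ! ?b" using k ab bl run unfolding inR_def by blast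
    then have "k ! ?tau p \<noteq> k ! ?tau q" by (metis max_def min_def)
    then show ?thesis using nth pq by simp
  qed
  show ?thesis unfolding inR_def using lk P1 P2 by simp
qed

lemma R1_iff: "i \<in> Ks \<Longrightarrow> length k = length s \<Longrightarrow> inR Ks s (sw i k) \<longleftrightarrow> inR Ks s k"
  using R1 s_strict sw_sw by metis

lemma ph_s: "ph Ks s s = 1" using R0 sorted_ninv[OF s_sorted] by (simp add: ph_def)

lemma ph_kill:
  assumes lk: "length k = length s" and i: "1 \<le> i" "i < length s"
  shows "(if k ! (i - 1) < k ! i then ph Ks s (sw i k) else if k ! (i - 1) = k ! i then 0 else - ph Ks s k)
     = (if i \<in> Ks then -1 else 0) * ph Ks s k"
proof (cases "i \<in> Ks")
  case True
  consider "k ! (i - 1) < k ! i" | "k ! (i - 1) = k ! i" | "k ! i < k ! (i - 1)" by linarith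
  then show ?thesis
  proof cases
    case 1
    have "ph Ks s (sw i k) = - ph Ks s k"
      using R1_iff[OF True lk] ninv_sw_asc[of i k] 1 i lk by (simp add: ph_def)
    then show ?thesis using 1 True by simp
  next
    case 2
    then have "\<not> inR Ks s k" using R3 True by auto
    then show ?thesis using 2 True by (simp add: ph_def)
  next
    case 3 then show ?thesis using True by simp
  qed
next
  case False
  consider "k ! (i - 1) < k ! i" | "k ! (i - 1) = k ! i" | "k ! i < k ! (i - 1)" by linarith
  then show ?thesis
  proof cases
    case 1
    have "\<not> inR Ks s (sw i k)"
    proof
      assume "inR Ks s (sw i k)"
      then have "sw i k ! (i - 1) \<le> sw i k ! i" using R2 i False by blast
      then show False using 1 i lk by simp
    qed
    then show ?thesis using 1 False by (simp add: ph_def)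
  next
    case 2 then show ?thesis using False by simp
  next
    case 3
    have "\<not> inR Ks s k" using R2[of k i] i False 3 by auto
    then show ?thesis using 3 False by (simp add: ph_def)
  qed
qed

end


lemma inW_zero: "in_W n r alpha (\<lambda>_. 0)"
  unfolding in_W_def by (rule exI[of _ "\<lambda>_. 0"]) simp

lemma inW_add: "in_W n r alpha x \<Longrightarrow> in_W n r alpha y \<Longrightarrow> in_W n r alpha (\<lambda>l. x l + y l)"
proof -
  assume "in_W n r alpha x" "in_W n r alpha y"
  then obtain c d where c: "\<forall>l. x l = (\<Sum>p\<in>{1..<r} \<times> words n r. c p * relvec alpha (fst p) (snd p) l)"
    and d: "\<forall>l. y l = (\<Sum>p\<in>{1..<r} \<times> words n r. d p * relvec alpha (fst p) (snd p) l)"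
    unfolding in_W_def by blast
  show ?thesis unfolding in_W_def
    by (rule exI[of _ "\<lambda>p. c p + d p"]) (simp add: c d sum.distrib algebra_simps)
qed

lemma inW_scale: "in_W n r alpha x \<Longrightarrow> in_W n r alpha (\<lambda>l. a * x l)"
proof -
  assume "in_W n r alpha x"
  then obtain c where c: "\<forall>l. x l = (\<Sum>p\<in>{1..<r} \<times> words n r. c p * relvec alpha (fst p) (snd p) l)"
    unfolding in_W_def by blast
  show ?thesis unfolding in_W_def
    by (rule exI[of _ "\<lambda>p. a * c p"]) (simp add: c sum_distrib_left algebra_simps)
qed

lemma inW_sum: "finite S \<Longrightarrow> (\<And>s. s \<in> S \<Longrightarrow> in_W n r alpha (f s)) \<Longrightarrow> in_W n r alpha (\<lambda>l. \<Sum>s\<in>S. f s l)"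
proof (induction S rule: finite_induct)
  case empty then show ?case by (simp add: inW_zero)
next
  case (insert a S)
  then show ?case using inW_add[of n r alpha "f a" "\<lambda>l. \<Sum>s\<in>S. f s l"] by simp
qed

lemma inW_relvec: "i \<in> {1..<r} \<Longrightarrow> m \<in> words n r \<Longrightarrow> in_W n r alpha (relvec alpha i m)"
  unfolding in_W_def
proof (intro exI allI)
  fix l assume a: "i \<in> {1..<r}" "m \<in> words n r"
  have "(\<Sum>p\<in>{1..<r} \<times> words n r. (if p = (i, m) then 1 else 0) * relvec alpha (fst p) (snd p) l) =
     (\<Sum>p\<in>{1..<r} \<times> words n r. if p = (i, m) then relvec alpha (fst p) (snd p) l else 0)"
    by (rule sum.cong) auto
  also have "\<dots> = relvec alpha i m l" using a by (simp add: sum.delta')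
  finally show "relvec alpha i m l = (\<Sum>p\<in>{1..<r} \<times> words n r. (if p = (i, m) then 1 else 0) * relvec alpha (fst p) (snd p) l)" by simp
qed

lemma inW_cong: "in_W n r alpha x \<Longrightarrow> (\<And>l. x l = y l) \<Longrightarrow> in_W n r alpha y"
proof -
  assume "in_W n r alpha x" "\<And>l. x l = y l"
  then have "x = y" by auto
  then show ?thesis using \<open>in_W n r alpha x\<close> by simp
qed

lemma inW_diff: "in_W n r alpha x \<Longrightarrow> in_W n r alpha y \<Longrightarrow> in_W n r alpha (\<lambda>l. x l - y l)"
  using inW_add[of n r alpha x "\<lambda>l. (-1) * y l"] inW_scale[of n r alpha y "-1"] by simp

lemma relvec_eq: "m \<in> words n r \<Longrightarrow> 1 \<le> i \<Longrightarrow> i < r \<Longrightarrow>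
  relvec alpha i m = (\<lambda>l. rv i (single m) l - chi alpha i * single m l)"
proof -
  assume a: "m \<in> words n r" "1 \<le> i" "i < r"
  have "\<And>l. Pi i l m = rv i (single m) l"
  proof -
    fix l
    have sm: "supp n r (single m)" using a by (simp add: supp_def single_def)
    have "(\<Sum>m'\<in>words n r. Pi i l m' * single m m') = Pi i l m"
      using a by (simp add: single_def if_distrib sum.delta' cong: if_cong)
    then show "Pi i l m = rv i (single m) l" using Pi_sum[OF sm a(2,3), of l] by simp
  qed
  then show ?thesis unfolding relvec_def by auto
qed

lemma wsep_mset:
  assumes w: "\<And>q q'. q < c \<Longrightarrow> c \<le> q' \<Longrightarrow> q' < length l \<Longrightarrow> l ! q \<le> l ! q'"
  shows "mset (take c l) = mset (take c (sort l))"
proof (cases "c \<le> length l")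
  case False
  then show ?thesis by simp
next
  case True
  have sep: "\<forall>x\<in>set (take c l). \<forall>y\<in>set (drop c l). x \<le> y"
  proof (intro ballI)
    fix x y assume x: "x \<in> set (take c l)" and y: "y \<in> set (drop c l)"
    obtain q where q: "q < length (take c l)" "x = take c l ! q" using x by (auto simp: in_set_conv_nth)
    obtain q' where q': "q' < length (drop c l)" "y = drop c l ! q'" using y by (auto simp: in_set_conv_nth)
    have "l ! q \<le> l ! (c + q')" using w[of q "c + q'"] q q' True by simp
    then show "x \<le> y" using q q' True by simp
  qed
  have "sort l = sort (take c l) @ sort (drop c l)"
  proof (rule properties_for_sort)
    show "mset (sort (take c l) @ sort (drop c l)) = mset l"
      by (metis append_take_drop_id mset_append mset_sort)
    show "sorted (sort (take c l) @ sort (drop c l))" using sep by (simp add: sorted_append)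
  qed
  then have "take c (sort l) = sort (take c l)" using True by simp
  then show ?thesis by simp
qed

context lsetup
begin

definition Phi :: "(nat \<Rightarrow> nat \<Rightarrow> nat) \<Rightarrow> nat list \<Rightarrow> complex" where
  "Phi B k = ph KK (repw n B) k"

lemma rs: "B \<in> beta n r lam \<Longrightarrow> rsetup KK (repw n B)"
proof
  assume B: "B \<in> beta n r lam"
  have lr: "length (repw n B) = r" using rep_words[OF B] by (simp add: words_length)
  show "sorted (repw n B)" using sorted_repw[OF beta_cbd[OF B]] .
  fix i assume i: "i \<in> KK"
  show "1 \<le> i \<and> i < length (repw n B) \<and> repw n B ! (i - 1) < repw n B ! i"
    using KK_range[OF i] lr rep_strict[OF B i] by simp
qed

lemma chi_KK: "chi (strong lam) i = (if i \<in> KK then -1 else 0)"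
  by (simp add: chi_def KK_def)

lemma Phi_nz: "B \<in> beta n r lam \<Longrightarrow> Phi B k \<noteq> 0 \<Longrightarrow> inR KK (repw n B) k"
  by (simp add: Phi_def ph_def split: if_splits)

lemma beta_inj: "B \<in> beta n r lam \<Longrightarrow> B' \<in> beta n r lam \<Longrightarrow> mset (repw n B) = mset (repw n B') \<Longrightarrow> B = B'"
  using sorted_mset_eq[OF sorted_repw[OF beta_cbd] sorted_repw[OF beta_cbd]] cls_rep by metis

lemma Phi_rep: "B \<in> beta n r lam \<Longrightarrow> B' \<in> beta n r lam \<Longrightarrow> Phi B (repw n B') = (if B = B' then 1 else 0)"
proof -
  assume B: "B \<in> beta n r lam" and B': "B' \<in> beta n r lam"
  interpret rsetup KK "repw n B" by (rule rs[OF B])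
  show ?thesis
  proof (cases "B = B'")
    case True then show ?thesis using ph_s by (simp add: Phi_def)
  next
    case False
    have "\<not> inR KK (repw n B) (repw n B')"
    proof
      assume "inR KK (repw n B) (repw n B')"
      then have "mset (repw n B') = mset (repw n B)" using R4 by simp
      then show False using beta_inj[OF B' B] False by simp
    qed
    then show ?thesis using False by (simp add: Phi_def ph_def)
  qed
qed

lemma Phi_kill:
  assumes B: "B \<in> beta n r lam" and m: "m \<in> words n r" and i: "1 \<le> i" "i < r"
  shows "(\<Sum>l\<in>words n r. Phi B l * Pi i l m) = chi (strong lam) i * Phi B m"
proof -
  interpret rsetup KK "repw n B" by (rule rs[OF B])
  have lr: "length (repw n B) = r" using rep_words[OF B] by (simp add: words_length)
  have lm: "length m = r" using m by (simp add: words_length)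
  have "(\<Sum>l\<in>words n r. Phi B l * Pi i l m) =
     (if m ! (i - 1) < m ! i then Phi B (sw i m) else if m ! (i - 1) = m ! i then 0 else - Phi B m)"
    using Pi_col_sum[OF m i, of "Phi B"] by simp
  also have "\<dots> = chi (strong lam) i * Phi B m"
    using ph_kill[of m i] lr lm i unfolding Phi_def chi_KK by simp
  finally show ?thesis .
qed

lemma Phi_kill_vec:
  assumes B: "B \<in> beta n r lam" and z: "supp n r z" and i: "1 \<le> i" "i < r"
  shows "(\<Sum>l\<in>words n r. Phi B l * (rv i z l - chi (strong lam) i * z l)) = 0"
proof -
  have "(\<Sum>l\<in>words n r. Phi B l * rv i z l) = (\<Sum>l\<in>words n r. Phi B l * (\<Sum>m\<in>words n r. Pi i l m * z m))"
    using Pi_sum[OF z i] by simp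
  also have "\<dots> = (\<Sum>l\<in>words n r. \<Sum>m\<in>words n r. Phi B l * (Pi i l m * z m))"
    by (simp add: sum_distrib_left)
  also have "\<dots> = (\<Sum>m\<in>words n r. \<Sum>l\<in>words n r. Phi B l * (Pi i l m * z m))"
    by (rule sum.swap)
  also have "\<dots> = (\<Sum>m\<in>words n r. z m * (\<Sum>l\<in>words n r. Phi B l * Pi i l m))"
    by (simp add: sum_distrib_left mult.commute mult.left_commute)
  also have "\<dots> = (\<Sum>m\<in>words n r. z m * (chi (strong lam) i * Phi B m))"
    using Phi_kill[OF B _ i] by simp
  also have "\<dots> = (\<Sum>l\<in>words n r. Phi B l * (chi (strong lam) i * z l))"
    by (simp add: algebra_simps)
  finally show ?thesis by (simp add: right_diff_distrib sum_subtractf)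
qed

lemma Phi_kill_relvec:
  assumes B: "B \<in> beta n r lam" and m: "m \<in> words n r" and i: "1 \<le> i" "i < r"
  shows "(\<Sum>l\<in>words n r. Phi B l * relvec (strong lam) i m l) = 0"
proof -
  have sm: "supp n r (single m)" using m by (simp add: supp_def single_def)
  show ?thesis using Phi_kill_vec[OF B sm i] relvec_eq[OF m i, of "strong lam"] by simp
qed

end


lemma in_block_nth: "x \<in> set (block mu j l) \<Longrightarrow> 1 \<le> j \<Longrightarrow>
  \<exists>e. e < mu j \<and> cut mu (j - 1) + e < length l \<and> x = l ! (cut mu (j - 1) + e)"
proof -
  assume x: "x \<in> set (block mu j l)" and j: "1 \<le> j"
  obtain e where e: "e < length (block mu j l)" "x = block mu j l ! e"
    using x by (auto simp: in_set_conv_nth)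
  show ?thesis using e by (intro exI[of _ e]) (auto simp: block_cut[OF j])
qed

lemma Pi_asc: "m ! (i - 1) < m ! i \<Longrightarrow> Pi i l m = (if l = sw i m then 1 else 0)"
  by (simp add: Pi_def Let_def sw_def)

lemma vec_expand: "supp n r z \<Longrightarrow> z l = (\<Sum>m\<in>words n r. z m * single m l)"
proof -
  assume z: "supp n r z"
  show ?thesis
  proof (cases "l \<in> words n r")
    case True
    have "(\<Sum>m\<in>words n r. z m * single m l) = (\<Sum>m\<in>words n r. if m = l then z m else 0)"
      by (rule sum.cong) (auto simp: single_def)
    then show ?thesis using True by simp
  next
    case False
    then have "(\<Sum>m\<in>words n r. z m * single m l) = 0" by (auto simp: single_def intro!: sum.neutral)
    then show ?thesis using z False by (simp add: supp_def)
  qed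
qed

lemma finite_beta[simp]: "finite (beta n r lam)"
  by (rule finite_subset[OF _ finite_Mat[of n r]]) (auto simp: beta_def)

context lsetup
begin

lemma sorted_strict_beta:
  assumes k: "k \<in> words n r" and s: "sorted k" and st: "\<forall>c\<in>KK. k ! (c - 1) < k ! c"
  shows "cls n mu k \<in> beta n r lam"
proof -
  let ?C = "cls n mu k"
  have M: "?C \<in> Mat n r" using cls_Mat(1)[OF k cut_n] .
  have co: "\<forall>j\<in>{1..n}. co n ?C j = lam ! (j - 1)" using cls_Mat(2)[OF k cut_n] by (simp add: mu_def)
  have lk: "length k = r" using k by (simp add: words_length)
  have cbd: "col_block_diag ?C"
    unfolding col_block_diag_def
  proof (intro allI impI)
    fix i j i' s' assume pos: "0 < ?C i j" and iss: "i' \<le> i \<and> j < s'"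
    show "?C i' s' = 0"
    proof (rule ccontr)
      assume "?C i' s' \<noteq> 0"
      then have ij: "i \<in> {1..n}" "j \<in> {1..n}" "i \<in> set (block mu j k)" and
          iss': "i' \<in> {1..n}" "s' \<in> {1..n}" "i' \<in> set (block mu s' k)"
        using pos unfolding cls_def by (auto split: if_splits simp: count_mset_0_iff[symmetric])
      obtain e where e: "e < mu j" "cut mu (j - 1) + e < length k" "i = k ! (cut mu (j - 1) + e)"
        using in_block_nth[OF ij(3)] ij by auto
      obtain e' where e': "e' < mu s'" "cut mu (s' - 1) + e' < length k" "i' = k ! (cut mu (s' - 1) + e')"
        using in_block_nth[OF iss'(3)] iss' by auto
      let ?p = "cut mu (j - 1) + e" and ?q = "cut mu (s' - 1) + e'" and ?c = "cut mu j"
      have cj: "?c = cut mu (j - 1) + mu j" using cut_Suc[of mu "j - 1"] ij by simp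
      have pc: "?p < ?c" using cj e by simp
      have "j \<le> s' - 1" using iss by linarith
      then have cq: "?c \<le> ?q" using cut_mono[of j "s' - 1" mu] by simp
      have spp: "s' - 1 < pp"
      proof (rule ccontr)
        assume "\<not> s' - 1 < pp"
        moreover have "s' - 1 < n" using iss' by auto
        ultimately have "lam ! (s' - 1) = 0" using zero_from by simp
        then show False using e' iss' by (simp add: mu_def)
      qed
      have cK: "?c \<in> KK" unfolding KK_char using ij iss spp by auto
      have c1: "1 \<le> ?c" "?c < r" using KK_range[OF cK] by auto
      have "k ! ?p \<le> k ! (?c - 1)" using s pc c1 lk by (intro sorted_nth_mono) auto
      also have "\<dots> < k ! ?c" using st cK by simp
      also have "\<dots> \<le> k ! ?q" using s cq e' lk by (intro sorted_nth_mono) auto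
      finally have "i < i'" using e e' by simp
      then show False using iss by simp
    qed
  qed
  show ?thesis unfolding beta_def using M co cbd by simp
qed

lemma RL:
  "k \<in> words n r \<Longrightarrow> in_W n r (strong lam) (\<lambda>l. single k l - (\<Sum>B\<in>beta n r lam. Phi B k * single (repw n B) l))"
proof (induction "ninv k" arbitrary: k rule: less_induct)
  case less
  have lk: "length k = r" using less.prems by (simp add: words_length)
  show ?case
  proof (cases "sorted k")
    case True
    show ?thesis
    proof (cases "\<forall>c\<in>KK. k ! (c - 1) < k ! c")
      case st: True
      define B0 where "B0 = cls n mu k"
      have B0: "B0 \<in> beta n r lam" unfolding B0_def using sorted_strict_beta[OF less.prems True st] .
      have rB0: "repw n B0 = k"
      proof -
        have cl: "cls n mu (repw n B0) = cls n mu k" using cls_rep[OF B0] B0_def by simp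
        have "mset (take (cut mu n) (repw n B0)) = mset (take (cut mu n) k)"
          using cls_prefix[OF rep_words[OF B0] less.prems cl order_refl] .
        then have "mset (repw n B0) = mset k"
          using cut_n lk rep_words[OF B0] by (simp add: words_length)
        then show ?thesis using sorted_mset_eq[OF sorted_repw[OF beta_cbd[OF B0]] True] by simp
      qed
      have "\<And>B. B \<in> beta n r lam \<Longrightarrow> Phi B k * single (repw n B) l = (if B = B0 then single k l else 0)" for l
        using Phi_rep[OF _ B0] rB0 by (metis mult_zero_left mult_1)
      then have "(\<Sum>B\<in>beta n r lam. Phi B k * single (repw n B) l) = single k l" for l
        using B0 by (simp add: sum.delta')
      then show ?thesis using inW_zero by simp
    next
      case False
      then obtain c where c: "c \<in> KK" "\<not> k ! (c - 1) < k ! c" by blast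
      have c1: "1 \<le> c" "c < r" using KK_range[OF c(1)] by auto
      have eq: "k ! (c - 1) = k ! c" using c True sorted_no_desc[of k c] c1 lk by simp
      have Ph0: "Phi B k = 0" if B: "B \<in> beta n r lam" for B
      proof (rule ccontr)
        assume "Phi B k \<noteq> 0"
        then have "inR KK (repw n B) k" using Phi_nz[OF B] by simp
        then show False using rsetup.R3[OF rs[OF B] _ c(1)] eq by simp
      qed
      have rel: "relvec (strong lam) c k = single k"
      proof
        fix l show "relvec (strong lam) c k l = single k l"
          using eq c(1) by (simp add: relvec_def Pi_def Let_def chi_KK)
      qed
      have "in_W n r (strong lam) (single k)" using inW_relvec[of c r k n "strong lam"] c1 less.prems rel by simp
      then show ?thesis using Ph0 by (simp cong: sum.cong)
    qed
  next
    case False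
    define j where "j = fdesc k"
    have j: "1 \<le> j" "j < length k" "k ! j < k ! (j - 1)" using fdesc[OF False] unfolding j_def by auto
    let ?k' = "sw j k"
    have k'w: "?k' \<in> words n r" using sw_words j lk less.prems by simp
    have n': "ninv ?k' < ninv k" using ninv_sw_desc[of j k] j by simp
    have asc: "?k' ! (j - 1) < ?k' ! j" using j by simp
    have IH: "in_W n r (strong lam) (\<lambda>l. single ?k' l - (\<Sum>B\<in>beta n r lam. Phi B ?k' * single (repw n B) l))"
      using less.hyps[OF n' k'w] .
    have Pk: "Phi B k = chi (strong lam) j * Phi B ?k'" if B: "B \<in> beta n r lam" for B
    proof -
      have "(\<Sum>l\<in>words n r. Phi B l * Pi j l ?k') = Phi B (sw j ?k')"
        using Pi_col_sum[OF k'w j(1), of "Phi B"] asc lk j by simp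
      then show ?thesis using Phi_kill[OF B k'w j(1)] lk j by simp
    qed
    have pa: "Pi j l ?k' = (if l = sw j ?k' then 1 else 0)" for l
      using asc by (simp add: Pi_def Let_def sw_def)
    have rel: "relvec (strong lam) j ?k' l = single k l - chi (strong lam) j * single ?k' l" for l
      using pa[of l] j by (simp add: relvec_def single_def)
    have R: "in_W n r (strong lam) (relvec (strong lam) j ?k')" using inW_relvec k'w j lk by simp
    have "in_W n r (strong lam) (\<lambda>l. relvec (strong lam) j ?k' l +
        chi (strong lam) j * (single ?k' l - (\<Sum>B\<in>beta n r lam. Phi B ?k' * single (repw n B) l)))"
      by (intro inW_add inW_scale R IH)
    then show ?thesis
    proof (rule inW_cong)
      fix l
      show "relvec (strong lam) j ?k' l + chi (strong lam) j * (single ?k' l - (\<Sum>B\<in>beta n r lam. Phi B ?k' * single (repw n B) l))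
        = single k l - (\<Sum>B\<in>beta n r lam. Phi B k * single (repw n B) l)"
        using Pk by (simp add: rel algebra_simps sum_distrib_left)
    qed
  qed
qed

end


context lsetup
begin

lemma class_mset: "A \<in> beta n r lam \<Longrightarrow> m \<in> words n r \<Longrightarrow> cls n mu m = A \<Longrightarrow> t \<le> n \<Longrightarrow>
  mset (take (cut mu t) m) = mset (take (cut mu t) (repw n A))"
  using cls_prefix[OF _ rep_words] cls_rep by metis

lemma class_eq_rep:
  assumes A: "A \<in> beta n r lam" and m: "m \<in> words n r" and cm: "cls n mu m = A"
    and R: "inR KK (repw n A) m"
  shows "m = repw n A"
proof -
  interpret rsetup KK "repw n A" by (rule rs[OF A])
  have "\<forall>c\<in>KK. mset (take c m) = mset (take c (repw n A))"
  proof
    fix c assume c: "c \<in> KK"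
    obtain j where j: "c = cut mu j" "1 \<le> j" "j < pp" using c KK_char by auto
    show "mset (take c m) = mset (take c (repw n A))" using class_mset[OF A m cm, of j] j pp_le by simp
  qed
  then show ?thesis using R5[OF R] by simp
qed

lemma yA_beta: "A \<in> beta n r lam \<Longrightarrow> yA n r A m = (if m \<in> words n r \<and> cls n mu m = A then 1 else 0)"
  using yA_cls[of A n r m] beta_co[of A] by simp

lemma key_Y:
  assumes A: "A \<in> beta n r lam" and B: "B \<in> beta n r lam" and m: "m \<in> words n r"
  shows "yA n r A m * Phi B m = (if m = repw n A \<and> B = A then 1 else 0)"
proof -
  have yrep: "yA n r A (repw n A) = 1" using yA_beta[OF A] rep_words[OF A] cls_rep[OF A] by simp
  have prep: "Phi A (repw n A) = 1" using Phi_rep[OF A A] by simp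
  show ?thesis
  proof (cases "yA n r A m = 0 \<or> Phi B m = 0")
    case True
    then show ?thesis using yrep prep by auto
  next
    case False
    then have cm: "cls n mu m = A" and R: "inR KK (repw n B) m"
      using yA_beta[OF A, of m] Phi_nz[OF B] by (auto split: if_splits)
    have m1: "mset m = mset (repw n B)" using rsetup.R4[OF rs[OF B] R] .
    have m2: "mset m = mset (repw n A)"
      using class_mset[OF A m cm order_refl] cut_n m rep_words[OF A] by (simp add: words_length)
    have BA: "B = A" using beta_inj[OF B A] m1 m2 by simp
    have "m = repw n A" using class_eq_rep[OF A m cm] R BA by simp
    then show ?thesis using BA yrep prep by simp
  qed
qed

lemma Y:
  assumes A: "A \<in> beta n r lam"
  shows "in_W n r (strong lam) (\<lambda>l. yA n r A l - single (repw n A) l)"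
proof -
  let ?E = "\<lambda>m l. single m l - (\<Sum>B\<in>beta n r lam. Phi B m * single (repw n B) l)"
  have W: "in_W n r (strong lam) (\<lambda>l. \<Sum>m\<in>words n r. yA n r A m * ?E m l)"
    by (intro inW_sum inW_scale RL) auto
  show ?thesis
  proof (rule inW_cong[OF W])
    fix l
    have ys: "supp n r (yA n r A)" by (simp add: supp_def yA_def)
    have s1: "(\<Sum>m\<in>words n r. yA n r A m * (\<Sum>B\<in>beta n r lam. Phi B m * single (repw n B) l)) = single (repw n A) l"
    proof -
      have "(\<Sum>m\<in>words n r. yA n r A m * (\<Sum>B\<in>beta n r lam. Phi B m * single (repw n B) l))
          = (\<Sum>m\<in>words n r. \<Sum>B\<in>beta n r lam. (yA n r A m * Phi B m) * single (repw n B) l)"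
        by (simp add: sum_distrib_left mult.assoc)
      also have "\<dots> = (\<Sum>B\<in>beta n r lam. \<Sum>m\<in>words n r. (yA n r A m * Phi B m) * single (repw n B) l)"
        by (rule sum.swap)
      also have "\<dots> = (\<Sum>B\<in>beta n r lam. (\<Sum>m\<in>words n r. if m = repw n A \<and> B = A then 1 else 0) * single (repw n B) l)"
        by (intro sum.cong refl) (simp add: key_Y[OF A] sum_distrib_right)
      also have "\<dots> = (\<Sum>B\<in>beta n r lam. (if B = A then 1 else 0) * single (repw n B) l)"
      proof (intro sum.cong refl)
        fix B
        have "(\<Sum>m\<in>words n r. if m = repw n A \<and> B = A then 1 else 0) = (if B = A then (1::complex) else 0)"
          using rep_words[OF A] by (cases "B = A") auto
        then show "(\<Sum>m\<in>words n r. if m = repw n A \<and> B = A then 1 else 0) * single (repw n B) l =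
            (if B = A then 1 else 0) * single (repw n B) l" by simp
      qed
      also have "\<dots> = (\<Sum>B\<in>beta n r lam. if B = A then single (repw n B) l else 0)"
        by (intro sum.cong refl) simp
      also have "\<dots> = single (repw n A) l" using A by (simp add: sum.delta')
      finally show ?thesis .
    qed
    have "(\<Sum>m\<in>words n r. yA n r A m * ?E m l) =
        (\<Sum>m\<in>words n r. yA n r A m * single m l) -
        (\<Sum>m\<in>words n r. yA n r A m * (\<Sum>B\<in>beta n r lam. Phi B m * single (repw n B) l))"
      by (simp add: right_diff_distrib sum_subtractf)
    also have "\<dots> = yA n r A l - single (repw n A) l" using vec_expand[OF ys, of l] s1 by simp
    finally show "(\<Sum>m\<in>words n r. yA n r A m * ?E m l) = yA n r A l - single (repw n A) l" .
  qed
qed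

lemma OS:
  assumes A: "A \<in> beta n r lam" and B: "B \<in> beta n r lam" and g: "g \<in> gens n"
    and l: "l \<in> words n r" and p1: "Phi B l \<noteq> 0" and p2: "rhov n r g (yA n r A) l \<noteq> 0"
  shows "l = repw n B"
proof -
  interpret rsetup KK "repw n B" by (rule rs[OF B])
  have R: "inR KK (repw n B) l" using Phi_nz[OF B p1] .
  obtain k where k: "k \<in> words n r" "rho g l k * yA n r A k \<noteq> 0"
    using p2 unfolding rhov_def by (meson sum.not_neutral_contains_not_neutral)
  have ck: "cls n mu k = A" using k yA_beta[OF A, of k] by (auto split: if_splits)
  have rk: "actv g k l \<noteq> 0" using k by (simp add: rho_actv)
  have lk: "length k = r" "length l = r" using k l by (auto simp: words_length)
  have strict: "k ! q < k ! q'" if "c \<in> KK" "q < c" "c \<le> q'" "q' < r" for c q q'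
    using class_strict[OF A k(1) ck that] .
  have ws: "l ! q \<le> l ! q'" if c: "c \<in> KK" and q: "q < c" "c \<le> q'" "q' < length l" for c q q'
  proof -
    have sq: "k ! q < k ! q'" using strict[OF c q(1,2)] q lk by simp
    have qr: "q < r" "q' < r" using q lk by auto
    from g consider (e) i where "g = E i" | (f) i where "g = F i" | (kk) i where "g = K i"
      by (cases g) auto
    then show ?thesis
    proof cases
      case e
      then have "eact i k l \<noteq> 0" using rk by (simp add: actv_def)
      then obtain p where p: "p < length k" "k ! p = Suc i" "l = k[p := i]"
        using eact_local by blast
      show ?thesis using sq p qr lk by (auto simp: nth_list_update)
    next
      case f
      then have "fact_act i k l \<noteq> 0" using rk by (simp add: actv_def)
      then obtain p where p: "p < length k" "k ! p = i" "l = k[p := Suc i]"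
        using fact_local by blast
      show ?thesis using sq p qr lk by (auto simp: nth_list_update)
    next
      case kk
      then have "kact i k l \<noteq> 0" using rk by (simp add: actv_def)
      then have "l = k" using kact_local by blast
      then show ?thesis using sq by simp
    qed
  qed
  have sl: "sort l = repw n B"
    using properties_for_sort[OF R4[OF R, symmetric] s_sorted] .
  have "\<forall>c\<in>KK. mset (take c l) = mset (take c (repw n B))"
  proof
    fix c assume c: "c \<in> KK"
    show "mset (take c l) = mset (take c (repw n B))"
      using wsep_mset[of c l] ws[OF c] sl by simp
  qed
  then show ?thesis using R5[OF R] by simp
qed

end


context lsetup
begin

lemma Phi_single: "B \<in> beta n r lam \<Longrightarrow> m \<in> words n r \<Longrightarrow> (\<Sum>k\<in>words n r. Phi B k * single m k) = Phi B m"
proof -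
  assume "m \<in> words n r"
  have "(\<Sum>k\<in>words n r. Phi B k * single m k) = (\<Sum>k\<in>words n r. if k = m then Phi B k else 0)"
    by (intro sum.cong refl) (simp add: single_def)
  then show ?thesis using \<open>m \<in> words n r\<close> by simp
qed

theorem main_iso: "S_iso_D n r lam (strong lam)"
  unfolding S_iso_D_def
proof (intro exI[of _ Phi] conjI allI impI ballI)
  fix y :: "(nat \<Rightarrow> nat \<Rightarrow> nat) \<Rightarrow> complex"
  let ?x = "\<lambda>k. \<Sum>B'\<in>beta n r lam. y B' * single (repw n B') k"
  show "\<exists>x. \<forall>B\<in>beta n r lam. (\<Sum>k\<in>words n r. Phi B k * x k) = y B"
  proof (intro exI ballI)
    fix B assume B: "B \<in> beta n r lam"
    have "(\<Sum>k\<in>words n r. Phi B k * ?x k) = (\<Sum>k\<in>words n r. \<Sum>B'\<in>beta n r lam. y B' * (Phi B k * single (repw n B') k))"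
      by (simp add: sum_distrib_left mult.commute mult.left_commute)
    also have "\<dots> = (\<Sum>B'\<in>beta n r lam. \<Sum>k\<in>words n r. y B' * (Phi B k * single (repw n B') k))"
      by (rule sum.swap)
    also have "\<dots> = (\<Sum>B'\<in>beta n r lam. y B' * Phi B (repw n B'))"
      by (intro sum.cong refl) (simp add: sum_distrib_left[symmetric] Phi_single[OF B rep_words])
    also have "\<dots> = (\<Sum>B'\<in>beta n r lam. if B' = B then y B' else 0)"
      by (intro sum.cong refl) (auto simp: Phi_rep[OF B])
    also have "\<dots> = y B" using B by (simp add: sum.delta')
    finally show "(\<Sum>k\<in>words n r. Phi B k * ?x k) = y B" .
  qed
next
  fix x :: vec assume xs: "\<forall>k. k \<notin> words n r \<longrightarrow> x k = 0"
  have sx: "supp n r x" using xs by (simp add: supp_def)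
  let ?E = "\<lambda>m l. single m l - (\<Sum>B\<in>beta n r lam. Phi B m * single (repw n B) l)"
  show "(\<forall>B\<in>beta n r lam. (\<Sum>k\<in>words n r. Phi B k * x k) = 0) = in_W n r (strong lam) x"
  proof
    assume z: "\<forall>B\<in>beta n r lam. (\<Sum>k\<in>words n r. Phi B k * x k) = 0"
    have W: "in_W n r (strong lam) (\<lambda>l. \<Sum>m\<in>words n r. x m * ?E m l)"
      by (intro inW_sum inW_scale RL) auto
    show "in_W n r (strong lam) x"
    proof (rule inW_cong[OF W])
      fix l
      have "(\<Sum>m\<in>words n r. x m * (\<Sum>B\<in>beta n r lam. Phi B m * single (repw n B) l)) =
          (\<Sum>m\<in>words n r. \<Sum>B\<in>beta n r lam. (Phi B m * x m) * single (repw n B) l)"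
        by (simp add: sum_distrib_left mult.commute mult.left_commute)
      also have "\<dots> = (\<Sum>B\<in>beta n r lam. \<Sum>m\<in>words n r. (Phi B m * x m) * single (repw n B) l)"
        by (rule sum.swap)
      also have "\<dots> = (\<Sum>B\<in>beta n r lam. (\<Sum>m\<in>words n r. Phi B m * x m) * single (repw n B) l)"
        by (simp add: sum_distrib_right)
      also have "\<dots> = 0" using z by simp
      finally have s0: "(\<Sum>m\<in>words n r. x m * (\<Sum>B\<in>beta n r lam. Phi B m * single (repw n B) l)) = 0" .
      have "(\<Sum>m\<in>words n r. x m * ?E m l) = (\<Sum>m\<in>words n r. x m * single m l) -
          (\<Sum>m\<in>words n r. x m * (\<Sum>B\<in>beta n r lam. Phi B m * single (repw n B) l))"
        by (simp add: right_diff_distrib sum_subtractf)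
      also have "\<dots> = x l" using s0 vec_expand[OF sx, of l] by simp
      finally show "(\<Sum>m\<in>words n r. x m * ?E m l) = x l" .
    qed
  next
    assume "in_W n r (strong lam) x"
    then obtain c where c: "\<forall>l. x l = (\<Sum>p\<in>{1..<r} \<times> words n r. c p * relvec (strong lam) (fst p) (snd p) l)"
      unfolding in_W_def by blast
    show "\<forall>B\<in>beta n r lam. (\<Sum>k\<in>words n r. Phi B k * x k) = 0"
    proof
      fix B assume B: "B \<in> beta n r lam"
      have "(\<Sum>k\<in>words n r. Phi B k * x k) =
          (\<Sum>k\<in>words n r. \<Sum>p\<in>{1..<r} \<times> words n r. c p * (Phi B k * relvec (strong lam) (fst p) (snd p) k))"
        using c by (simp add: sum_distrib_left mult.commute mult.left_commute)
      also have "\<dots> = (\<Sum>p\<in>{1..<r} \<times> words n r. \<Sum>k\<in>words n r. c p * (Phi B k * relvec (strong lam) (fst p) (snd p) k))"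
        by (rule sum.swap)
      also have "\<dots> = (\<Sum>p\<in>{1..<r} \<times> words n r. c p * (\<Sum>k\<in>words n r. Phi B k * relvec (strong lam) (fst p) (snd p) k))"
        by (simp add: sum_distrib_left)
      also have "\<dots> = 0"
        by (intro sum.neutral ballI) (auto simp: Phi_kill_relvec[OF B])
      finally show "(\<Sum>k\<in>words n r. Phi B k * x k) = 0" .
    qed
  qed
next
  fix g B k assume g: "g \<in> gens n" and B: "B \<in> beta n r lam" and k: "k \<in> words n r"
  define G where "G m = (\<Sum>l\<in>words n r. Phi B l * rho g l m)" for m
  have lin: "(\<Sum>l\<in>words n r. Phi B l * rhov n r g z l) = (\<Sum>m\<in>words n r. z m * G m)" for z
  proof -
    have "(\<Sum>l\<in>words n r. Phi B l * rhov n r g z l) = (\<Sum>l\<in>words n r. \<Sum>m\<in>words n r. z m * (Phi B l * rho g l m))"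
      by (simp add: rhov_def sum_distrib_left mult.commute mult.left_commute)
    also have "\<dots> = (\<Sum>m\<in>words n r. \<Sum>l\<in>words n r. z m * (Phi B l * rho g l m))" by (rule sum.swap)
    also have "\<dots> = (\<Sum>m\<in>words n r. z m * G m)" by (simp add: G_def sum_distrib_left)
    finally show ?thesis .
  qed
  have Grel: "(\<Sum>m\<in>words n r. relvec (strong lam) i m' m * G m) = 0" if i: "1 \<le> i" "i < r" and m': "m' \<in> words n r" for i m'
  proof -
    have sm: "supp n r (single m')" using m' by (simp add: supp_def single_def)
    let ?z = "rhov n r g (single m')"
    have rz: "rhov n r g (relvec (strong lam) i m') = (\<lambda>l. rv i ?z l - chi (strong lam) i * ?z l)"
    proof -
      have "rhov n r g (relvec (strong lam) i m') = rhov n r g (\<lambda>l. rv i (single m') l - chi (strong lam) i * single m' l)"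
        using relvec_eq[OF m' i] by simp
      also have "\<dots> = (\<lambda>l. rhov n r g (rv i (single m')) l - chi (strong lam) i * ?z l)"
        by (simp add: rhov_def right_diff_distrib sum_subtractf sum_distrib_left algebra_simps)
      also have "\<dots> = (\<lambda>l. rv i ?z l - chi (strong lam) i * ?z l)" using rho_rv[OF g sm i] by simp
      finally show ?thesis .
    qed
    have "(\<Sum>m\<in>words n r. relvec (strong lam) i m' m * G m) =
        (\<Sum>l\<in>words n r. Phi B l * rhov n r g (relvec (strong lam) i m') l)" using lin by simp
    also have "\<dots> = 0" unfolding rz using Phi_kill_vec[OF B rhov_supp[OF g] i] by simp
    finally show ?thesis .
  qed
  have GW: "(\<Sum>m\<in>words n r. w m * G m) = 0" if w: "in_W n r (strong lam) w" for w
  proof -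
    obtain c where c: "\<forall>l. w l = (\<Sum>p\<in>{1..<r} \<times> words n r. c p * relvec (strong lam) (fst p) (snd p) l)"
      using w unfolding in_W_def by blast
    have "(\<Sum>m\<in>words n r. w m * G m) =
        (\<Sum>m\<in>words n r. \<Sum>p\<in>{1..<r} \<times> words n r. c p * (relvec (strong lam) (fst p) (snd p) m * G m))"
      using c by (simp add: sum_distrib_right mult.assoc)
    also have "\<dots> = (\<Sum>p\<in>{1..<r} \<times> words n r. \<Sum>m\<in>words n r. c p * (relvec (strong lam) (fst p) (snd p) m * G m))"
      by (rule sum.swap)
    also have "\<dots> = (\<Sum>p\<in>{1..<r} \<times> words n r. c p * (\<Sum>m\<in>words n r. relvec (strong lam) (fst p) (snd p) m * G m))"
      by (simp add: sum_distrib_left)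
    also have "\<dots> = 0" by (intro sum.neutral ballI) (auto simp: Grel)
    finally show ?thesis .
  qed
  have Gsingle: "(\<Sum>m\<in>words n r. single m' m * G m) = G m'" if "m' \<in> words n r" for m'
  proof -
    have "(\<Sum>m\<in>words n r. single m' m * G m) = (\<Sum>m\<in>words n r. if m = m' then G m else 0)"
      by (intro sum.cong refl) (auto simp: single_def)
    then show ?thesis using that by simp
  qed
  have Gk: "G k = (\<Sum>A\<in>beta n r lam. Phi A k * G (repw n A))"
  proof -
    have "0 = (\<Sum>m\<in>words n r. (single k m - (\<Sum>A\<in>beta n r lam. Phi A k * single (repw n A) m)) * G m)"
      using GW[OF RL[OF k]] by simp
    also have "\<dots> = (\<Sum>m\<in>words n r. single k m * G m) - (\<Sum>m\<in>words n r. \<Sum>A\<in>beta n r lam. Phi A k * (single (repw n A) m * G m))"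
      by (simp add: left_diff_distrib sum_subtractf sum_distrib_right mult.assoc)
    also have "\<dots> = G k - (\<Sum>A\<in>beta n r lam. \<Sum>m\<in>words n r. Phi A k * (single (repw n A) m * G m))"
    proof -
      have "(\<Sum>m\<in>words n r. \<Sum>A\<in>beta n r lam. Phi A k * (single (repw n A) m * G m)) =
          (\<Sum>A\<in>beta n r lam. \<Sum>m\<in>words n r. Phi A k * (single (repw n A) m * G m))"
        by (rule sum.swap)
      then show ?thesis using Gsingle[OF k] by simp
    qed
    also have "\<dots> = G k - (\<Sum>A\<in>beta n r lam. Phi A k * G (repw n A))"
      by (simp add: sum_distrib_left[symmetric] Gsingle rep_words)
    finally show ?thesis by simp
  qed
  have GA: "G (repw n A) = rhov n r g (yA n r A) (repw n B)" if A: "A \<in> beta n r lam" for A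
  proof -
    have "(\<Sum>m\<in>words n r. (yA n r A m - single (repw n A) m) * G m) = 0" using GW[OF Y[OF A]] .
    then have e1: "(\<Sum>m\<in>words n r. yA n r A m * G m) = G (repw n A)"
      using Gsingle[OF rep_words[OF A]] by (simp add: left_diff_distrib sum_subtractf)
    have "(\<Sum>m\<in>words n r. yA n r A m * G m) = (\<Sum>l\<in>words n r. Phi B l * rhov n r g (yA n r A) l)"
      using lin by simp
    also have "\<dots> = (\<Sum>l\<in>words n r. if l = repw n B then rhov n r g (yA n r A) l else 0)"
    proof (intro sum.cong refl)
      fix l assume l: "l \<in> words n r"
      show "Phi B l * rhov n r g (yA n r A) l = (if l = repw n B then rhov n r g (yA n r A) l else 0)"
      proof (cases "l = repw n B")
        case True then show ?thesis using Phi_rep[OF B B] by simp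
      next
        case False then show ?thesis using OS[OF A B g l] by auto
      qed
    qed
    also have "\<dots> = rhov n r g (yA n r A) (repw n B)" using rep_words[OF B] by simp
    finally show ?thesis using e1 by simp
  qed
  have SA: "S_act n r g B A = rhov n r g (yA n r A) (repw n B)" if A: "A \<in> beta n r lam" for A
  proof -
    have Am: "A \<in> Mat n r" using beta_co[OF A] by simp
    show ?thesis using S_act_char[OF Am g, of B] beta_co[OF A] beta_co[OF B] by simp
  qed
  have "(\<Sum>A\<in>beta n r lam. S_act n r g B A * Phi A k) = (\<Sum>A\<in>beta n r lam. Phi A k * G (repw n A))"
    by (intro sum.cong refl) (simp add: SA GA)
  also have "\<dots> = G k" using Gk by simp
  finally show "(\<Sum>A\<in>beta n r lam. S_act n r g B A * Phi A k) = (\<Sum>l\<in>words n r. Phi B l * rho g l k)"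
    by (simp add: G_def)
qed

end

theorem mainTheorem10:
  fixes n r :: nat and lam :: "nat list"
  assumes "lam \<in> Lambda_bullet n r"
  shows "S_iso_D n r lam (strong lam)"
proof -
  interpret lsetup n r lam by (rule lsetup.intro[OF assms])
  show ?thesis by (rule main_iso)
qed


end
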